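(* Let $\mathbb A$ be an abelian category. Let $a:A_1\to A_0$, $b:B_1\to B_0$ and $b':B'_1\to B'_0$ be objects of $\mathbb A^{[1]}$ and let $(u_0,u_1):b\to b'$ be a morphism in $\mathbb A^{[1]}$ such that the induced morphisms $\mathrm{Ker}(b)\to\mathrm{Ker}(b')$ and $\mathrm{Coker}(b)\to\mathrm{Coker}(b')$ are isomorphisms. If $A_0$ is a projective object of $\mathbb A$, then the functor of groupoids $(u_0,u_1)\circ-:\mathbf{Hom}_{\mathbb A^{[1]}}(a,b)\to\mathbf{Hom}_{\mathbb A^{[1]}}(a,b')$ is an equivalence of categories.
   Context: Let $\mathbb A$ be an abelian category. The 2-category $\mathbb A^{[1]}$ has as objects the morphisms $a:A_1\to A_0$ of $\mathbb A$. For objects $a:A_1\to A_0$ and $b:B_1\to B_0$, a morphism $a\to b$ is a pair $(f_0,f_1)$ of morphisms $f_i:A_i\to B_i$ of $\mathbb A$ with $b f_1=f_0 a$; composition is componentwise. A 2-arrow $(f_0,f_1)\Rightarrow(g_0,g_1)$ between morphisms $a\to b$ is a morphism $\alpha:A_0\to B_1$ of $\mathbb A$ with $f_1-g_1=\alpha a$ and $f_0-g_0=b\alpha$; vertical composition is addition of such $\alpha$'s, and whiskering is given by $(h_0,h_1)\circ\alpha=h_1\alpha$ and $\alpha\circ(e_0,e_1)=\alpha e_0$. All 2-arrows are invertible, so each $\mathbf{Hom}_{\mathbb A^{[1]}}(a,b)$ is a groupoid. A morphism $(f_0,f_1):a\to b$ induces $\mathrm{Ker}(a)\to\mathrm{Ker}(b)$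 (restriction of $f_1$) and $\mathrm{Coker}(a)\to\mathrm{Coker}(b)$ (induced by $f_0$). *)

theory Defs
  imports Main
begin

record ('o, 'm) acat =
  Obj :: "'o set"
  Arr :: "'m set"
  Dom :: "'m \<Rightarrow> 'o"
  Cod :: "'m \<Rightarrow> 'o"
  Cmp :: "'m \<Rightarrow> 'm \<Rightarrow> 'm"   (* Cmp g f = g o f *)
  Idm :: "'o \<Rightarrow> 'm"
  Add :: "'m \<Rightarrow> 'm \<Rightarrow> 'm"
  Zer :: "'o \<Rightarrow> 'o \<Rightarrow> 'm"
  Ngt :: "'m \<Rightarrow> 'm"

definition hom :: "('o, 'm) acat \<Rightarrow> 'o \<Rightarrow> 'o \<Rightarrow> 'm set" where
  "hom C x y = {f \<in> Arr C. Dom C f = x \<and> Cod C f = y}"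

definition category :: "('o, 'm) acat \<Rightarrow> bool" where
  "category C \<longleftrightarrow>
     (\<forall>f \<in> Arr C. Dom C f \<in> Obj C \<and> Cod C f \<in> Obj C) \<and>
     (\<forall>x \<in> Obj C. Idm C x \<in> hom C x x) \<and>
     (\<forall>x y z f g. f \<in> hom C x y \<longrightarrow> g \<in> hom C y z \<longrightarrow> Cmp C g f \<in> hom C x z) \<and>
     (\<forall>w x y z f g h. f \<in> hom C w x \<longrightarrow> g \<in> hom C x y \<longrightarrow> h \<in> hom C y z \<longrightarrow>
         Cmp C h (Cmp C g f) = Cmp C (Cmp C h g) f) \<and>
     (\<forall>x y f. f \<in> hom C x y \<longrightarrow> Cmp C f (Idm C x) = f \<and> Cmp C (Idm C y) f = f)"

definition preadditive :: "('o, 'm) acat \<Rightarrow> bool" where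
  "preadditive C \<longleftrightarrow> category C \<and>
     (\<forall>x \<in> Obj C. \<forall>y \<in> Obj C.
        Zer C x y \<in> hom C x y \<and>
        (\<forall>f \<in> hom C x y. Add C f (Zer C x y) = f \<and> Ngt C f \<in> hom C x y \<and>
                          Add C f (Ngt C f) = Zer C x y) \<and>
        (\<forall>f \<in> hom C x y. \<forall>g \<in> hom C x y. Add C f g \<in> hom C x y \<and> Add C f g = Add C g f) \<and>
        (\<forall>f \<in> hom C x y. \<forall>g \<in> hom C x y. \<forall>h \<in> hom C x y.
            Add C (Add C f g) h = Add C f (Add C g h))) \<and>
     (\<forall>x y z f g h. f \<in> hom C x y \<longrightarrow> g \<in> hom C x y \<longrightarrow> h \<in> hom C y z \<longrightarrow>
         Cmp C h (Add C f g) = Add C (Cmp C h f) (Cmp C h g)) \<and>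
     (\<forall>w x y f g h. f \<in> hom C x y \<longrightarrow> g \<in> hom C x y \<longrightarrow> h \<in> hom C w x \<longrightarrow>
         Cmp C (Add C f g) h = Add C (Cmp C f h) (Cmp C g h))"

definition zero_object :: "('o, 'm) acat \<Rightarrow> 'o \<Rightarrow> bool" where
  "zero_object C z \<longleftrightarrow> z \<in> Obj C \<and>
     (\<forall>x \<in> Obj C. (\<exists>!f. f \<in> hom C z x) \<and> (\<exists>!f. f \<in> hom C x z))"

definition has_biproduct :: "('o, 'm) acat \<Rightarrow> 'o \<Rightarrow> 'o \<Rightarrow> bool" where
  "has_biproduct C x y \<longleftrightarrow> (\<exists>p i1 i2 p1 p2. p \<in> Obj C \<and>
     i1 \<in> hom C x p \<and> i2 \<in> hom C y p \<and> p1 \<in> hom C p x \<and> p2 \<in> hom C p y \<and>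
     Cmp C p1 i1 = Idm C x \<and> Cmp C p2 i2 = Idm C y \<and>
     Add C (Cmp C i1 p1) (Cmp C i2 p2) = Idm C p)"

definition is_kernel :: "('o, 'm) acat \<Rightarrow> 'm \<Rightarrow> 'm \<Rightarrow> bool" where
  "is_kernel C f k \<longleftrightarrow> f \<in> Arr C \<and> k \<in> Arr C \<and> Cod C k = Dom C f \<and>
     Cmp C f k = Zer C (Dom C k) (Cod C f) \<and>
     (\<forall>w g. g \<in> hom C w (Dom C f) \<longrightarrow> Cmp C f g = Zer C w (Cod C f) \<longrightarrow>
        (\<exists>!h. h \<in> hom C w (Dom C k) \<and> Cmp C k h = g))"

definition is_cokernel :: "('o, 'm) acat \<Rightarrow> 'm \<Rightarrow> 'm \<Rightarrow> bool" where
  "is_cokernel C f q \<longleftrightarrow> f \<in> Arr C \<and> q \<in> Arr C \<and> Dom C q = Cod C f \<and>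
     Cmp C q f = Zer C (Dom C f) (Cod C q) \<and>
     (\<forall>w g. g \<in> hom C (Cod C f) w \<longrightarrow> Cmp C g f = Zer C (Dom C f) w \<longrightarrow>
        (\<exists>!h. h \<in> hom C (Cod C q) w \<and> Cmp C h q = g))"

definition is_mono :: "('o, 'm) acat \<Rightarrow> 'm \<Rightarrow> bool" where
  "is_mono C f \<longleftrightarrow> f \<in> Arr C \<and>
     (\<forall>w g h. g \<in> hom C w (Dom C f) \<longrightarrow> h \<in> hom C w (Dom C f) \<longrightarrow>
        Cmp C f g = Cmp C f h \<longrightarrow> g = h)"

definition is_epi :: "('o, 'm) acat \<Rightarrow> 'm \<Rightarrow> bool" where
  "is_epi C f \<longleftrightarrow> f \<in> Arr C \<and>
     (\<forall>w g h. g \<in> hom C (Cod C f) w \<longrightarrow> h \<in> hom C (Cod C f) w \<longrightarrow>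
        Cmp C g f = Cmp C h f \<longrightarrow> g = h)"

definition is_iso :: "('o, 'm) acat \<Rightarrow> 'm \<Rightarrow> bool" where
  "is_iso C f \<longleftrightarrow> f \<in> Arr C \<and> (\<exists>g \<in> hom C (Cod C f) (Dom C f).
     Cmp C g f = Idm C (Dom C f) \<and> Cmp C f g = Idm C (Cod C f))"

definition abelian_category :: "('o, 'm) acat \<Rightarrow> bool" where
  "abelian_category C \<longleftrightarrow> preadditive C \<and>
     (\<exists>z. zero_object C z) \<and>
     (\<forall>x \<in> Obj C. \<forall>y \<in> Obj C. has_biproduct C x y) \<and>
     (\<forall>f \<in> Arr C. (\<exists>k. is_kernel C f k) \<and> (\<exists>q. is_cokernel C f q)) \<and>
     (\<forall>f. is_mono C f \<longrightarrow> (\<exists>g. is_kernel C g f)) \<and>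
     (\<forall>f. is_epi C f \<longrightarrow> (\<exists>g. is_cokernel C g f))"

definition projective :: "('o, 'm) acat \<Rightarrow> 'o \<Rightarrow> bool" where
  "projective C P \<longleftrightarrow> P \<in> Obj C \<and>
     (\<forall>e g. is_epi C e \<longrightarrow> g \<in> hom C P (Cod C e) \<longrightarrow>
        (\<exists>h \<in> hom C P (Dom C e). Cmp C e h = g))"

text \<open>The 2-category of arrows: objects are arrows a : A1 \<rightarrow> A0 (A1 = Dom a, A0 = Cod a).\<close>

definition arr_hom :: "('o, 'm) acat \<Rightarrow> 'm \<Rightarrow> 'm \<Rightarrow> ('m \<times> 'm) set" where
  "arr_hom C a b = {(f0, f1). f0 \<in> hom C (Cod C a) (Cod C b) \<and> f1 \<in> hom C (Dom C a) (Dom C b) \<and>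
                              Cmp C b f1 = Cmp C f0 a}"

definition two_cell :: "('o, 'm) acat \<Rightarrow> 'm \<Rightarrow> 'm \<Rightarrow> 'm \<times> 'm \<Rightarrow> 'm \<times> 'm \<Rightarrow> 'm set" where
  "two_cell C a b f g = {\<alpha> \<in> hom C (Cod C a) (Dom C b).
      Add C (snd f) (Ngt C (snd g)) = Cmp C \<alpha> a \<and> Add C (fst f) (Ngt C (fst g)) = Cmp C b \<alpha>}"

text \<open>Vertical composition of \<alpha> : f \<Rightarrow> g and \<beta> : g \<Rightarrow> h is \<alpha> + \<beta>; identities are zero.
  In the groupoid Hom(a,b) every arrow is invertible (inverse = negation).\<close>

definition postcomp_obj :: "('o, 'm) acat \<Rightarrow> 'm \<times> 'm \<Rightarrow> 'm \<times> 'm \<Rightarrow> 'm \<times> 'm" where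
  "postcomp_obj C u f = (Cmp C (fst u) (fst f), Cmp C (snd u) (snd f))"

definition postcomp_arr :: "('o, 'm) acat \<Rightarrow> 'm \<times> 'm \<Rightarrow> 'm \<Rightarrow> 'm" where
  "postcomp_arr C u \<alpha> = Cmp C (snd u) \<alpha>"

text \<open>The functor F = (u0,u1) \<circ> - : Hom(a,b) \<rightarrow> Hom(a,b') is an equivalence of categories:
  there is a functor G : Hom(a,b') \<rightarrow> Hom(a,b) (object map Go, arrow map Ga, where
  Ga h h' \<beta> is the image of \<beta> : h \<Rightarrow> h') together with natural isomorphisms
  \<eta> : Id \<Rightarrow> G F and \<epsilon> : F G \<Rightarrow> Id.  (All arrows of these groupoids are isomorphisms,
  so components of natural transformations are automatically invertible.)\<close>

definition postcomp_equivalence ::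
  "('o, 'm) acat \<Rightarrow> 'm \<Rightarrow> 'm \<Rightarrow> 'm \<Rightarrow> 'm \<times> 'm \<Rightarrow> bool" where
  "postcomp_equivalence C a b b' u \<longleftrightarrow>
    (let Fo = postcomp_obj C u; Fa = postcomp_arr C u in
     \<exists>Go Ga \<eta> \<epsilon>.
       \<comment> \<open>G is a functor Hom(a,b') \<rightarrow> Hom(a,b)\<close>
       (\<forall>h \<in> arr_hom C a b'. Go h \<in> arr_hom C a b) \<and>
       (\<forall>h \<in> arr_hom C a b'. \<forall>h' \<in> arr_hom C a b'. \<forall>\<beta> \<in> two_cell C a b' h h'.
           Ga h h' \<beta> \<in> two_cell C a b (Go h) (Go h')) \<and>
       (\<forall>h \<in> arr_hom C a b'. Ga h h (Zer C (Cod C a) (Dom C b')) = Zer C (Cod C a) (Dom C b)) \<and>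
       (\<forall>h \<in> arr_hom C a b'. \<forall>h' \<in> arr_hom C a b'. \<forall>h'' \<in> arr_hom C a b'.
         \<forall>\<beta> \<in> two_cell C a b' h h'. \<forall>\<beta>' \<in> two_cell C a b' h' h''.
           Ga h h'' (Add C \<beta> \<beta>') = Add C (Ga h h' \<beta>) (Ga h' h'' \<beta>')) \<and>
       \<comment> \<open>\<eta> : Id \<Rightarrow> G F natural\<close>
       (\<forall>f \<in> arr_hom C a b. \<eta> f \<in> two_cell C a b f (Go (Fo f))) \<and>
       (\<forall>f \<in> arr_hom C a b. \<forall>g \<in> arr_hom C a b. \<forall>\<alpha> \<in> two_cell C a b f g.
           Add C (\<eta> f) (Ga (Fo f) (Fo g) (Fa \<alpha>)) = Add C \<alpha> (\<eta> g)) \<and>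
       \<comment> \<open>\<epsilon> : F G \<Rightarrow> Id natural\<close>
       (\<forall>h \<in> arr_hom C a b'. \<epsilon> h \<in> two_cell C a b' (Fo (Go h)) h) \<and>
       (\<forall>h \<in> arr_hom C a b'. \<forall>h' \<in> arr_hom C a b'. \<forall>\<beta> \<in> two_cell C a b' h h'.
           Add C (\<epsilon> h) \<beta> = Add C (Fa (Ga h h' \<beta>)) (\<epsilon> h')))"

end

theory Submission
  imports Defs
begin

lemma ex1_two: "\<exists>!x. P x \<Longrightarrow> P a \<Longrightarrow> P b \<Longrightarrow> a = b" by blast

locale abc =
  fixes C :: "('o,'m) acat"
  assumes ab: "abelian_category C"
begin

abbreviation cmp (infixr "\<cdot>" 75) where "g \<cdot> f \<equiv> Cmp C g f"
abbreviation add (infixl "\<oplus>" 65) where "f \<oplus> g \<equiv> Add C f g"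
abbreviation sub (infixl "\<ominus>" 65) where "f \<ominus> g \<equiv> Add C f (Ngt C g)"

lemma pre: "preadditive C" using ab abelian_category_def by blast
lemma cat: "category C" using pre preadditive_def by blast

lemmas cat1 = cat[unfolded category_def, THEN conjunct1]
lemmas cat2 = cat[unfolded category_def, THEN conjunct2, THEN conjunct1]
lemmas cat3 = cat[unfolded category_def, THEN conjunct2, THEN conjunct2, THEN conjunct1]
lemmas cat4 = cat[unfolded category_def, THEN conjunct2, THEN conjunct2, THEN conjunct2, THEN conjunct1]
lemmas cat5 = cat[unfolded category_def, THEN conjunct2, THEN conjunct2, THEN conjunct2, THEN conjunct2]
lemmas pre2 = pre[unfolded preadditive_def, THEN conjunct2, THEN conjunct1]
lemmas pre3 = pre[unfolded preadditive_def, THEN conjunct2, THEN conjunct2, THEN conjunct1]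
lemmas pre4 = pre[unfolded preadditive_def, THEN conjunct2, THEN conjunct2, THEN conjunct2]

lemma hom_arr: "f \<in> hom C x y \<Longrightarrow> f \<in> Arr C" by (simp add: hom_def)
lemma arr_hom: "f \<in> Arr C \<Longrightarrow> f \<in> hom C (Dom C f) (Cod C f)" by (simp add: hom_def)
lemma hom_obj1: "f \<in> hom C x y \<Longrightarrow> x \<in> Obj C"
  using cat1 unfolding hom_def by auto
lemma hom_obj2: "f \<in> hom C x y \<Longrightarrow> y \<in> Obj C"
  using cat1 unfolding hom_def by auto
lemma hom_dom: "f \<in> hom C x y \<Longrightarrow> Dom C f = x" by (simp add: hom_def)
lemma hom_cod: "f \<in> hom C x y \<Longrightarrow> Cod C f = y" by (simp add: hom_def)

lemma comp: "f \<in> hom C x y \<Longrightarrow> g \<in> hom C y z \<Longrightarrow> g \<cdot> f \<in> hom C x z"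
  using cat3 by blast
lemma assoc: "f \<in> hom C w x \<Longrightarrow> g \<in> hom C x y \<Longrightarrow> h \<in> hom C y z \<Longrightarrow> h \<cdot> (g \<cdot> f) = (h \<cdot> g) \<cdot> f"
  using cat4 by blast
lemma id_hom[intro]: "x \<in> Obj C \<Longrightarrow> Idm C x \<in> hom C x x"
  using cat2 by blast
lemma idr: "f \<in> hom C x y \<Longrightarrow> f \<cdot> Idm C x = f"
  using cat5 by blast
lemma idl: "f \<in> hom C x y \<Longrightarrow> Idm C y \<cdot> f = f"
  using cat5 by blast

lemma zer_hom[intro]: "x \<in> Obj C \<Longrightarrow> y \<in> Obj C \<Longrightarrow> Zer C x y \<in> hom C x y"
  using pre2 by blast
lemma grp: "f \<in> hom C x y \<Longrightarrow> f \<oplus> Zer C x y = f \<and> Ngt C f \<in> hom C x y \<and> f \<ominus> f = Zer C x y"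
  using pre2 hom_obj1[of f x y] hom_obj2[of f x y] by blast
lemma add_zero: "f \<in> hom C x y \<Longrightarrow> f \<oplus> Zer C x y = f" using grp by blast
lemma neg_hom[intro]: "f \<in> hom C x y \<Longrightarrow> Ngt C f \<in> hom C x y" using grp by blast
lemma add_neg: "f \<in> hom C x y \<Longrightarrow> f \<ominus> f = Zer C x y" using grp by blast
lemma grp2: "f \<in> hom C x y \<Longrightarrow> g \<in> hom C x y \<Longrightarrow> f \<oplus> g \<in> hom C x y \<and> f \<oplus> g = g \<oplus> f"
  using pre2 hom_obj1[of f x y] hom_obj2[of f x y] by blast
lemma add_hom[intro]: "f \<in> hom C x y \<Longrightarrow> g \<in> hom C x y \<Longrightarrow> f \<oplus> g \<in> hom C x y"
  using grp2 by blast
lemma add_comm: "f \<in> hom C x y \<Longrightarrow> g \<in> hom C x y \<Longrightarrow> f \<oplus> g = g \<oplus> f"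
  using grp2 by blast
lemma add_assoc: "f \<in> hom C x y \<Longrightarrow> g \<in> hom C x y \<Longrightarrow> h \<in> hom C x y \<Longrightarrow> f \<oplus> g \<oplus> h = f \<oplus> (g \<oplus> h)"
  using pre2 hom_obj1[of f x y] hom_obj2[of f x y] by blast
lemma distl: "f \<in> hom C x y \<Longrightarrow> g \<in> hom C x y \<Longrightarrow> h \<in> hom C y z \<Longrightarrow> h \<cdot> (f \<oplus> g) = h \<cdot> f \<oplus> h \<cdot> g"
  using pre3 by blast
lemma distr: "f \<in> hom C x y \<Longrightarrow> g \<in> hom C x y \<Longrightarrow> h \<in> hom C w x \<Longrightarrow> (f \<oplus> g) \<cdot> h = f \<cdot> h \<oplus> g \<cdot> h"
  using pre4 by blast

lemma zer_hom'[intro]: "f \<in> hom C x y \<Longrightarrow> Zer C x y \<in> hom C x y"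
  using hom_obj1 hom_obj2 by blast

lemma zero_add: "f \<in> hom C x y \<Longrightarrow> Zer C x y \<oplus> f = f"
  using add_comm[of f x y "Zer C x y"] add_zero[of f x y] zer_hom' by simp

lemma add_cancel_l: assumes "f \<in> hom C x y" "g \<in> hom C x y" "h \<in> hom C x y" "f \<oplus> g = f \<oplus> h"
  shows "g = h"
proof -
  have n: "Ngt C f \<in> hom C x y" using assms by blast
  have nf: "Ngt C f \<oplus> f = Zer C x y" using add_comm[OF n assms(1)] add_neg[OF assms(1)] by simp
  have "g = (Ngt C f \<oplus> f) \<oplus> g" using nf zero_add[OF assms(2)] by simp
  also have "\<dots> = Ngt C f \<oplus> (f \<oplus> h)" using assms n by (simp add: add_assoc)
  also have "\<dots> = (Ngt C f \<oplus> f) \<oplus> h" using assms n by (simp add: add_assoc)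
  also have "\<dots> = h" using nf zero_add[OF assms(3)] by simp
  finally show ?thesis .
qed

lemma sub_eq_zero: assumes "f \<in> hom C x y" "g \<in> hom C x y" shows "(f \<ominus> g = Zer C x y) = (f = g)"
proof
  assume a: "f \<ominus> g = Zer C x y"
  have n: "Ngt C g \<in> hom C x y" using assms by blast
  have "Ngt C g \<oplus> f = Ngt C g \<oplus> g" using a add_neg[OF assms(2)] add_comm[OF n assms(1)] add_comm[OF n assms(2)] by simp
  thus "f = g" using assms add_cancel_l n by blast
qed (use assms add_neg in auto)

lemma add_left_comm: assumes "f \<in> hom C x y" "g \<in> hom C x y" "h \<in> hom C x y" shows "f \<oplus> (g \<oplus> h) = g \<oplus> (f \<oplus> h)"
proof -
  have "f \<oplus> (g \<oplus> h) = (f \<oplus> g) \<oplus> h" using assms by (simp add: add_assoc)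
  also have "\<dots> = (g \<oplus> f) \<oplus> h" using assms add_comm by metis
  also have "\<dots> = g \<oplus> (f \<oplus> h)" using assms by (simp add: add_assoc)
  finally show ?thesis .
qed

lemma comp_zero_r: assumes "g \<in> hom C y z" "x \<in> Obj C" shows "g \<cdot> Zer C x y = Zer C x z"
proof -
  have y: "y \<in> Obj C" "z \<in> Obj C" using assms hom_obj1 hom_obj2 by blast+
  have h: "g \<cdot> Zer C x y \<in> hom C x z" using comp[OF zer_hom[OF assms(2) y(1)] assms(1)] .
  have "g \<cdot> Zer C x y \<oplus> g \<cdot> Zer C x y = g \<cdot> (Zer C x y \<oplus> Zer C x y)"
    using distl[OF zer_hom[OF assms(2) y(1)] zer_hom[OF assms(2) y(1)] assms(1)] by simp
  also have "\<dots> = g \<cdot> Zer C x y \<oplus> Zer C x z" using add_zero[OF h] add_zero[OF zer_hom[OF assms(2) y(1)]] by simp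
  finally show ?thesis using h add_cancel_l y assms(2) by blast
qed

lemma comp_zero_l: assumes "f \<in> hom C x y" "z \<in> Obj C" shows "Zer C y z \<cdot> f = Zer C x z"
proof -
  have y: "y \<in> Obj C" "x \<in> Obj C" using assms hom_obj1 hom_obj2 by blast+
  have h: "Zer C y z \<cdot> f \<in> hom C x z" using comp[OF assms(1) zer_hom[OF y(1) assms(2)]] .
  have "Zer C y z \<cdot> f \<oplus> Zer C y z \<cdot> f = (Zer C y z \<oplus> Zer C y z) \<cdot> f"
    using distr[OF zer_hom[OF y(1) assms(2)] zer_hom[OF y(1) assms(2)] assms(1)] by simp
  also have "\<dots> = Zer C y z \<cdot> f \<oplus> Zer C x z" using add_zero[OF h] add_zero[OF zer_hom[OF y(1) assms(2)]] by simp
  finally show ?thesis using h add_cancel_l y assms(2) by blast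
qed

lemma neg_unique: assumes "f \<in> hom C x y" "g \<in> hom C x y" "f \<oplus> g = Zer C x y" shows "Ngt C f = g"
  using add_cancel_l[OF assms(1) neg_hom[OF assms(1)] assms(2)] assms(3) add_neg[OF assms(1)] by simp

lemma comp_neg_r: assumes "f \<in> hom C x y" "h \<in> hom C y z" shows "h \<cdot> Ngt C f = Ngt C (h \<cdot> f)"
proof -
  have "h \<cdot> f \<oplus> h \<cdot> Ngt C f = h \<cdot> (f \<ominus> f)" using assms by (simp add: distl neg_hom)
  also have "\<dots> = Zer C x z" using add_neg[OF assms(1)] comp_zero_r[OF assms(2) hom_obj1[OF assms(1)]] by simp
  finally show ?thesis using assms neg_unique comp neg_hom by metis
qed

lemma comp_neg_l: assumes "f \<in> hom C x y" "h \<in> hom C w x" shows "Ngt C f \<cdot> h = Ngt C (f \<cdot> h)"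
proof -
  have "f \<cdot> h \<oplus> Ngt C f \<cdot> h = (f \<ominus> f) \<cdot> h" using assms by (simp add: distr neg_hom)
  also have "\<dots> = Zer C w y" using add_neg[OF assms(1)] comp_zero_l[OF assms(2) hom_obj2[OF assms(1)]] by simp
  finally show ?thesis using assms neg_unique comp neg_hom by metis
qed

lemma sub_distl: "f \<in> hom C x y \<Longrightarrow> g \<in> hom C x y \<Longrightarrow> h \<in> hom C y z \<Longrightarrow> h \<cdot> (f \<ominus> g) = h \<cdot> f \<ominus> h \<cdot> g"
  by (simp add: comp_neg_r distl neg_hom)
lemma sub_distr: "f \<in> hom C x y \<Longrightarrow> g \<in> hom C x y \<Longrightarrow> h \<in> hom C w x \<Longrightarrow> (f \<ominus> g) \<cdot> h = f \<cdot> h \<ominus> g \<cdot> h"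
  by (simp add: comp_neg_l distr neg_hom)

lemma neg_neg: assumes "f \<in> hom C x y" shows "Ngt C (Ngt C f) = f"
  using neg_unique[OF neg_hom[OF assms] assms] add_comm[OF neg_hom[OF assms] assms] add_neg[OF assms] by simp


lemmas ab4 = ab[unfolded abelian_category_def, THEN conjunct2, THEN conjunct2, THEN conjunct2, THEN conjunct1]
lemmas ab5 = ab[unfolded abelian_category_def, THEN conjunct2, THEN conjunct2, THEN conjunct2, THEN conjunct2, THEN conjunct1]
lemmas ab6 = ab[unfolded abelian_category_def, THEN conjunct2, THEN conjunct2, THEN conjunct2, THEN conjunct2, THEN conjunct2]

lemma has_ker: "f \<in> hom C x y \<Longrightarrow> \<exists>k. is_kernel C f k" using ab4 hom_arr by blast
lemma has_coker: "f \<in> hom C x y \<Longrightarrow> \<exists>k. is_cokernel C f k" using ab4 hom_arr by blast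

lemma ker_hom: "is_kernel C f k \<Longrightarrow> f \<in> hom C x y \<Longrightarrow> k \<in> hom C (Dom C k) x"
  unfolding is_kernel_def hom_def by auto
lemma ker_zero: "is_kernel C f k \<Longrightarrow> f \<in> hom C x y \<Longrightarrow> f \<cdot> k = Zer C (Dom C k) y"
  unfolding is_kernel_def hom_def by auto
lemma ker_fact: "is_kernel C f k \<Longrightarrow> f \<in> hom C x y \<Longrightarrow> g \<in> hom C w x \<Longrightarrow> f \<cdot> g = Zer C w y
   \<Longrightarrow> \<exists>h\<in>hom C w (Dom C k). k \<cdot> h = g"
proof -
  assume k: "is_kernel C f k" and f: "f \<in> hom C x y" and g: "g \<in> hom C w x" and z: "f \<cdot> g = Zer C w y"
  have U: "\<forall>w g. g \<in> hom C w (Dom C f) \<longrightarrow> f \<cdot> g = Zer C w (Cod C f) \<longrightarrow> (\<exists>!h. h \<in> hom C w (Dom C k) \<and> k \<cdot> h = g)"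
    using k unfolding is_kernel_def by blast
  have "g \<in> hom C w (Dom C f)" "f \<cdot> g = Zer C w (Cod C f)" using g z hom_dom[OF f] hom_cod[OF f] by (simp only:)+
  hence "\<exists>!h. h \<in> hom C w (Dom C k) \<and> k \<cdot> h = g" using U by (simp only:)
  thus ?thesis by blast
qed
lemma ker_canc: assumes "is_kernel C f k" "f \<in> hom C x y" "g \<in> hom C w (Dom C k)" "h \<in> hom C w (Dom C k)" "k \<cdot> g = k \<cdot> h"
  shows "g = h"
proof -
  have k: "k \<in> hom C (Dom C k) x" using assms ker_hom by blast
  have kg: "k \<cdot> g \<in> hom C w x" using comp[OF assms(3) k] .
  have "f \<cdot> (k \<cdot> g) = (f \<cdot> k) \<cdot> g" using assoc[OF assms(3) k assms(2)] .
  also have "\<dots> = Zer C (Dom C k) y \<cdot> g" using ker_zero[OF assms(1,2)] by (rule arg_cong)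
  also have "\<dots> = Zer C w y" using comp_zero_l[OF assms(3) hom_obj2[OF assms(2)]] .
  finally have "f \<cdot> (k \<cdot> g) = Zer C w y" .
  moreover have U: "\<forall>w g. g \<in> hom C w (Dom C f) \<longrightarrow> f \<cdot> g = Zer C w (Cod C f) \<longrightarrow> (\<exists>!h. h \<in> hom C w (Dom C k) \<and> k \<cdot> h = g)"
    using assms(1) unfolding is_kernel_def by blast
  moreover have "k \<cdot> g \<in> hom C w (Dom C f)" using kg hom_dom[OF assms(2)] by (simp only:)
  moreover have "Zer C w y = Zer C w (Cod C f)" using hom_cod[OF assms(2)] by (simp only:)
  ultimately have E: "\<exists>!h. h \<in> hom C w (Dom C k) \<and> k \<cdot> h = k \<cdot> g"
    by (simp only:)
  show ?thesis by (rule ex1_two[OF E], rule conjI[OF assms(3) refl], rule conjI[OF assms(4) assms(5)[symmetric]])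
qed

lemma coker_hom: "is_cokernel C f q \<Longrightarrow> f \<in> hom C x y \<Longrightarrow> q \<in> hom C y (Cod C q)"
  unfolding is_cokernel_def hom_def by auto
lemma coker_zero: "is_cokernel C f q \<Longrightarrow> f \<in> hom C x y \<Longrightarrow> q \<cdot> f = Zer C x (Cod C q)"
  unfolding is_cokernel_def hom_def by auto
lemma coker_fact: "is_cokernel C f q \<Longrightarrow> f \<in> hom C x y \<Longrightarrow> g \<in> hom C y w \<Longrightarrow> g \<cdot> f = Zer C x w
   \<Longrightarrow> \<exists>h\<in>hom C (Cod C q) w. h \<cdot> q = g"
proof -
  assume k: "is_cokernel C f q" and f: "f \<in> hom C x y" and g: "g \<in> hom C y w" and z: "g \<cdot> f = Zer C x w"
  have U: "\<forall>w g. g \<in> hom C (Cod C f) w \<longrightarrow> g \<cdot> f = Zer C (Dom C f) w \<longrightarrow> (\<exists>!h. h \<in> hom C (Cod C q) w \<and> h \<cdot> q = g)"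
    using k unfolding is_cokernel_def by blast
  have "g \<in> hom C (Cod C f) w" "g \<cdot> f = Zer C (Dom C f) w" using g z hom_dom[OF f] hom_cod[OF f] by (simp only:)+
  hence "\<exists>!h. h \<in> hom C (Cod C q) w \<and> h \<cdot> q = g" using U by (simp only:)
  thus ?thesis by blast
qed
lemma coker_canc: assumes "is_cokernel C f q" "f \<in> hom C x y" "g \<in> hom C (Cod C q) w" "h \<in> hom C (Cod C q) w" "g \<cdot> q = h \<cdot> q"
  shows "g = h"
proof -
  have q: "q \<in> hom C y (Cod C q)" using assms coker_hom by blast
  have gq: "g \<cdot> q \<in> hom C y w" using comp[OF q assms(3)] .
  have "(g \<cdot> q) \<cdot> f = g \<cdot> (q \<cdot> f)" using assoc[OF assms(2) q assms(3)] by simp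
  also have "\<dots> = g \<cdot> Zer C x (Cod C q)" using coker_zero[OF assms(1,2)] by simp
  also have "\<dots> = Zer C x w" using comp_zero_r[OF assms(3) hom_obj1[OF assms(2)]] .
  finally have "(g \<cdot> q) \<cdot> f = Zer C x w" .
  moreover have U: "\<forall>w g. g \<in> hom C (Cod C f) w \<longrightarrow> g \<cdot> f = Zer C (Dom C f) w \<longrightarrow> (\<exists>!h. h \<in> hom C (Cod C q) w \<and> h \<cdot> q = g)"
    using assms(1) unfolding is_cokernel_def by blast
  moreover have "g \<cdot> q \<in> hom C (Cod C f) w" using gq hom_cod[OF assms(2)] by (simp only:)
  moreover have "Zer C x w = Zer C (Dom C f) w" using hom_dom[OF assms(2)] by (simp only:)
  ultimately have E: "\<exists>!h. h \<in> hom C (Cod C q) w \<and> h \<cdot> q = g \<cdot> q"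
    by (simp only:)
  show ?thesis by (rule ex1_two[OF E], rule conjI[OF assms(3) refl], rule conjI[OF assms(4) assms(5)[symmetric]])
qed

lemma ker_mono: assumes "is_kernel C f k" shows "is_mono C k"
proof -
  have "f \<in> Arr C" "k \<in> Arr C" using assms unfolding is_kernel_def by blast+
  then have f: "f \<in> hom C (Dom C f) (Cod C f)" using arr_hom by blast
  show ?thesis unfolding is_mono_def
    using ker_canc[OF assms f] \<open>k \<in> Arr C\<close> by blast
qed
lemma coker_epi: assumes "is_cokernel C f q" shows "is_epi C q"
proof -
  have "f \<in> Arr C" "q \<in> Arr C" using assms unfolding is_cokernel_def by blast+
  then have f: "f \<in> hom C (Dom C f) (Cod C f)" using arr_hom by blast
  show ?thesis unfolding is_epi_def
    using coker_canc[OF assms f] \<open>q \<in> Arr C\<close> by blast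
qed

lemma mono_canc: assumes "is_mono C m" "g \<in> hom C w (Dom C m)" "h \<in> hom C w (Dom C m)" "m \<cdot> g = m \<cdot> h" shows "g = h"
proof -
  have U: "\<forall>w g h. g \<in> hom C w (Dom C m) \<longrightarrow> h \<in> hom C w (Dom C m) \<longrightarrow> m \<cdot> g = m \<cdot> h \<longrightarrow> g = h"
    using assms(1) unfolding is_mono_def by (rule conjunct2)
  show ?thesis using U[rule_format, OF assms(2,3,4)] .
qed
lemma epi_canc: assumes "is_epi C m" "g \<in> hom C (Cod C m) w" "h \<in> hom C (Cod C m) w" "g \<cdot> m = h \<cdot> m" shows "g = h"
proof -
  have U: "\<forall>w g h. g \<in> hom C (Cod C m) w \<longrightarrow> h \<in> hom C (Cod C m) w \<longrightarrow> g \<cdot> m = h \<cdot> m \<longrightarrow> g = h"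
    using assms(1) unfolding is_epi_def by (rule conjunct2)
  show ?thesis using U[rule_format, OF assms(2,3,4)] .
qed

lemma mono_comp: assumes "is_mono C m" "is_mono C n" "m \<in> hom C x y" "n \<in> hom C z x"
  shows "is_mono C (m \<cdot> n)"
  unfolding is_mono_def
proof (intro conjI allI impI)
  have mn: "m \<cdot> n \<in> hom C z y" using comp[OF assms(4,3)] .
  then show "m \<cdot> n \<in> Arr C" by (rule hom_arr)
  fix w g h assume g: "g \<in> hom C w (Dom C (m \<cdot> n))" and h: "h \<in> hom C w (Dom C (m \<cdot> n))"
    and e: "(m \<cdot> n) \<cdot> g = (m \<cdot> n) \<cdot> h"
  have d: "Dom C (m \<cdot> n) = z" using mn by (rule hom_dom)
  have g': "g \<in> hom C w z" and h': "h \<in> hom C w z" using g h d by simp_all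
  have "m \<cdot> (n \<cdot> g) = m \<cdot> (n \<cdot> h)" using e assoc[OF g' assms(4,3)] assoc[OF h' assms(4,3)] by simp
  moreover have "n \<cdot> g \<in> hom C w (Dom C m)" "n \<cdot> h \<in> hom C w (Dom C m)"
    using comp[OF g' assms(4)] comp[OF h' assms(4)] hom_dom[OF assms(3)] by simp_all
  ultimately have "n \<cdot> g = n \<cdot> h" using mono_canc[OF assms(1)] by blast
  moreover have "g \<in> hom C w (Dom C n)" "h \<in> hom C w (Dom C n)" using g' h' hom_dom[OF assms(4)] by simp_all
  ultimately show "g = h" using mono_canc[OF assms(2)] by blast
qed

lemma epi_I: assumes "e \<in> hom C x y" "\<And>w d. d \<in> hom C y w \<Longrightarrow> d \<cdot> e = Zer C x w \<Longrightarrow> d = Zer C y w"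
  shows "is_epi C e"
  unfolding is_epi_def
proof (intro conjI allI impI)
  show "e \<in> Arr C" using assms hom_arr by blast
  fix w g h assume g: "g \<in> hom C (Cod C e) w" and h: "h \<in> hom C (Cod C e) w" and gh: "g \<cdot> e = h \<cdot> e"
  have c: "Cod C e = y" using assms hom_cod by blast
  have "(g \<ominus> h) \<cdot> e = Zer C x w"
    using sub_distr[of g y w h e x] g h c assms gh add_neg[of "h \<cdot> e" x w] comp by auto
  hence "g \<ominus> h = Zer C y w" using assms(2) g h c by blast
  thus "g = h" using sub_eq_zero g h c by blast
qed

lemma mono_I: assumes "m \<in> hom C x y" "\<And>w d. d \<in> hom C w x \<Longrightarrow> m \<cdot> d = Zer C w y \<Longrightarrow> d = Zer C w x"
  shows "is_mono C m"
  unfolding is_mono_def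
proof (intro conjI allI impI)
  show "m \<in> Arr C" using assms hom_arr by blast
  fix w g h assume g: "g \<in> hom C w (Dom C m)" and h: "h \<in> hom C w (Dom C m)" and gh: "m \<cdot> g = m \<cdot> h"
  have c: "Dom C m = x" using assms hom_dom by blast
  have "m \<cdot> (g \<ominus> h) = Zer C w y"
    using sub_distl[of g w x h m y] g h c assms gh add_neg[of "m \<cdot> h" w y] comp by auto
  hence "g \<ominus> h = Zer C w x" using assms(2) g h c by blast
  thus "g = h" using sub_eq_zero g h c by blast
qed

end

context abc begin

lemma ker_dom: "is_kernel C f k \<Longrightarrow> Cod C k = Dom C f" unfolding is_kernel_def by blast
lemma coker_cod: "is_cokernel C f q \<Longrightarrow> Dom C q = Cod C f" unfolding is_cokernel_def by blast
lemma ker_arr: "is_kernel C f k \<Longrightarrow> f \<in> Arr C" unfolding is_kernel_def by blast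
lemma coker_arr: "is_cokernel C f k \<Longrightarrow> f \<in> Arr C" unfolding is_cokernel_def by blast

lemma mono_ker: "is_mono C f \<Longrightarrow> \<exists>g. is_kernel C g f" using ab5 by blast
lemma epi_coker: "is_epi C f \<Longrightarrow> \<exists>g. is_cokernel C g f" using ab6 by blast

lemma img:
  assumes f: "f \<in> hom C x y" and cq: "is_cokernel C f q" and km: "is_kernel C q m"
  shows "\<exists>e \<in> hom C x (Dom C m). m \<cdot> e = f \<and> is_epi C e"
proof -
  define Q where "Q = Cod C q"
  define I where "I = Dom C m"
  have q: "q \<in> hom C y Q" unfolding Q_def using coker_hom[OF cq f] .
  have m: "m \<in> hom C I y" unfolding I_def using ker_hom[OF km q] .
  have qf: "q \<cdot> f = Zer C x Q" unfolding Q_def using coker_zero[OF cq f] .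
  obtain e where e: "e \<in> hom C x I" "m \<cdot> e = f"
    using ker_fact[OF km q f qf] unfolding I_def by blast
  have qm: "q \<cdot> m = Zer C I Q" unfolding I_def using ker_zero[OF km q] .
  have "is_epi C e"
  proof (rule epi_I[OF e(1)])
    fix W d assume d: "d \<in> hom C I W" "d \<cdot> e = Zer C x W"
    obtain n where n: "is_kernel C d n" using has_ker[OF d(1)] by blast
    define N where "N = Dom C n"
    have nh: "n \<in> hom C N I" unfolding N_def using ker_hom[OF n d(1)] .
    obtain e' where e': "True" "e' \<in> hom C x N" "n \<cdot> e' = e"
      using ker_fact[OF n d(1) e(1) d(2)] unfolding N_def by blast
    have mn: "m \<cdot> n \<in> hom C N y" using comp[OF nh m] .
    have mono: "is_mono C (m \<cdot> n)" using mono_comp[OF ker_mono[OF km] ker_mono[OF n] m nh] .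
    obtain H where H: "is_kernel C H (m \<cdot> n)" using mono_ker[OF mono] by blast
    define Y where "Y = Cod C H"
    have "Dom C H = y" using ker_dom[OF H] hom_cod[OF mn] by simp
    hence Hh: "H \<in> hom C y Y" unfolding Y_def using arr_hom[OF ker_arr[OF H]] by simp
    have HZ: "H \<cdot> (m \<cdot> n) = Zer C N Y" using ker_zero[OF H Hh] hom_dom[OF mn] by simp
    have fe: "f = (m \<cdot> n) \<cdot> e'"
      using e(2) e'(3) assoc[OF e'(2) nh m] by simp
    have "H \<cdot> f = (H \<cdot> (m \<cdot> n)) \<cdot> e'" using fe assoc[OF e'(2) mn Hh] by simp
    also have "\<dots> = Zer C x Y" using HZ comp_zero_l[OF e'(2) hom_obj2[OF Hh]] by simp
    finally have Hf: "H \<cdot> f = Zer C x Y" .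
    obtain H' where H': "H' \<in> hom C Q Y" "H' \<cdot> q = H"
      using coker_fact[OF cq f Hh Hf] unfolding Q_def by blast
    have "H \<cdot> m = H' \<cdot> (q \<cdot> m)" using H'(2) assoc[OF m q H'(1)] by simp
    also have "\<dots> = Zer C I Y" using qm comp_zero_r[OF H'(1) hom_obj1[OF m]] by simp
    finally have Hm: "H \<cdot> m = Zer C I Y" .
    obtain r where r: "r \<in> hom C I (Dom C (m \<cdot> n))" "(m \<cdot> n) \<cdot> r = m"
      using ker_fact[OF H Hh m Hm] by blast
    have rh: "r \<in> hom C I N" using r(1) hom_dom[OF mn] by simp
    have nr: "n \<cdot> r \<in> hom C I (Dom C m)" using comp[OF rh nh] unfolding I_def .
    have idh: "Idm C I \<in> hom C I (Dom C m)" using id_hom[OF hom_obj1[OF m]] unfolding I_def .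
    have "m \<cdot> (n \<cdot> r) = m \<cdot> Idm C I" using r(2) assoc[OF rh nh m] idr[OF m] by simp
    hence nrI: "n \<cdot> r = Idm C I" using mono_canc[OF ker_mono[OF km] nr idh] by blast
    have "d = d \<cdot> (n \<cdot> r)" using nrI idr[OF d(1)] by simp
    also have "\<dots> = (d \<cdot> n) \<cdot> r" using assoc[OF rh nh d(1)] .
    also have "\<dots> = Zer C N W \<cdot> r" using ker_zero[OF n d(1)] unfolding N_def by simp
    also have "\<dots> = Zer C I W" using comp_zero_l[OF rh hom_obj2[OF d(1)]] .
    finally show "d = Zer C I W" .
  qed
  thus ?thesis using e unfolding I_def by blast
qed

lemma epi_is_coker:
  assumes ep: "is_epi C e" and eh: "e \<in> hom C x y" and k: "is_kernel C e \<kappa>"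
    and t: "t \<in> hom C x W" and tk: "t \<cdot> \<kappa> = Zer C (Dom C \<kappa>) W"
  shows "\<exists>t'\<in>hom C y W. t' \<cdot> e = t"
proof -
  obtain g where g: "is_cokernel C g e" using epi_coker[OF ep] by blast
  define G where "G = Dom C g"
  have "Cod C g = x" using coker_cod[OF g] hom_dom[OF eh] by simp
  hence gh: "g \<in> hom C G x" unfolding G_def using arr_hom[OF coker_arr[OF g]] by simp
  have eg: "e \<cdot> g = Zer C G y" using coker_zero[OF g gh] hom_cod[OF eh] by simp
  obtain g' where g': "g' \<in> hom C G (Dom C \<kappa>)" "\<kappa> \<cdot> g' = g" using ker_fact[OF k eh gh eg] by blast
  have kh: "\<kappa> \<in> hom C (Dom C \<kappa>) x" using ker_hom[OF k eh] .
  have "t \<cdot> g = (t \<cdot> \<kappa>) \<cdot> g'" using g'(2) assoc[OF g'(1) kh t] by simp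
  also have "\<dots> = Zer C G W" using tk comp_zero_l[OF g'(1) hom_obj2[OF t]] by simp
  finally have tg: "t \<cdot> g = Zer C G W" .
  show ?thesis using coker_fact[OF g gh t tg] hom_cod[OF eh] by simp
qed

lemma proj_lift:
  assumes P: "projective C P" and f: "f \<in> hom C x y" and cq: "is_cokernel C f q"
    and d: "d \<in> hom C P y" and qd: "q \<cdot> d = Zer C P (Cod C q)"
  shows "\<exists>\<gamma>\<in>hom C P x. f \<cdot> \<gamma> = d"
proof -
  have q: "q \<in> hom C y (Cod C q)" using coker_hom[OF cq f] .
  obtain m where km: "is_kernel C q m" using has_ker[OF q] by blast
  obtain e where e: "e \<in> hom C x (Dom C m)" "m \<cdot> e = f" "is_epi C e" using img[OF f cq km] by blast
  obtain d' where d': "d' \<in> hom C P (Dom C m)" "m \<cdot> d' = d" using ker_fact[OF km q d qd] by blast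
  have U: "\<forall>e g. is_epi C e \<longrightarrow> g \<in> hom C P (Cod C e) \<longrightarrow> (\<exists>h \<in> hom C P (Dom C e). e \<cdot> h = g)"
    using P unfolding projective_def by (rule conjunct2)
  have "d' \<in> hom C P (Cod C e)" using d'(1) hom_cod[OF e(1)] by simp
  then obtain \<gamma> where g: "\<gamma> \<in> hom C P (Dom C e)" "e \<cdot> \<gamma> = d'" using U e(3) by blast
  have gh: "\<gamma> \<in> hom C P x" using g(1) hom_dom[OF e(1)] by simp
  have mh: "m \<in> hom C (Dom C m) y" using ker_hom[OF km q] .
  have "f \<cdot> \<gamma> = m \<cdot> (e \<cdot> \<gamma>)" using e(2) assoc[OF gh e(1) mh] by simp
  also have "\<dots> = d" using g(2) d'(2) by simp
  finally show ?thesis using gh by blast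
qed

end

context abc begin

lemma homD: "f \<in> hom C x y \<Longrightarrow> f \<in> Arr C \<and> Dom C f = x \<and> Cod C f = y" by (simp add: hom_def)
lemma homI: "f \<in> Arr C \<Longrightarrow> Dom C f = x \<Longrightarrow> Cod C f = y \<Longrightarrow> f \<in> hom C x y" by (simp add: hom_def)

lemma dom_obj[simp]: "f \<in> Arr C \<Longrightarrow> Dom C f \<in> Obj C" using hom_obj1[OF arr_hom] .
lemma cod_obj[simp]: "f \<in> Arr C \<Longrightarrow> Cod C f \<in> Obj C" using hom_obj2[OF arr_hom] .

lemma comp_arr[simp]: "f \<in> Arr C \<Longrightarrow> g \<in> Arr C \<Longrightarrow> Dom C g = Cod C f \<Longrightarrow> g \<cdot> f \<in> Arr C"
  using comp[OF arr_hom, of f g "Cod C g"] arr_hom[of g] hom_arr by simp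
lemma hom_iff: "f \<in> hom C x y \<longleftrightarrow> f \<in> Arr C \<and> Dom C f = x \<and> Cod C f = y" by (simp add: hom_def)

lemma comp_dom[simp]: "f \<in> Arr C \<Longrightarrow> g \<in> Arr C \<Longrightarrow> Dom C g = Cod C f \<Longrightarrow> Dom C (g \<cdot> f) = Dom C f"
  using comp[of f "Dom C f" "Cod C f" g "Cod C g"] by (simp only: hom_iff)
lemma comp_cod[simp]: "f \<in> Arr C \<Longrightarrow> g \<in> Arr C \<Longrightarrow> Dom C g = Cod C f \<Longrightarrow> Cod C (g \<cdot> f) = Cod C g"
  using comp[of f "Dom C f" "Cod C f" g "Cod C g"] by (simp only: hom_iff)
lemma assoc_r[simp]: "f \<in> Arr C \<Longrightarrow> g \<in> Arr C \<Longrightarrow> h \<in> Arr C \<Longrightarrow> Dom C g = Cod C f \<Longrightarrow> Dom C h = Cod C g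
  \<Longrightarrow> (h \<cdot> g) \<cdot> f = h \<cdot> (g \<cdot> f)"
  using assoc[of f "Dom C f" "Cod C f" g "Cod C g" h "Cod C h"] by (simp only: hom_iff)

lemma zer_arr[simp]: "x \<in> Obj C \<Longrightarrow> y \<in> Obj C \<Longrightarrow> Zer C x y \<in> Arr C"
  using zer_hom[of x y] by (simp only: hom_iff)
lemma zer_dom[simp]: "x \<in> Obj C \<Longrightarrow> y \<in> Obj C \<Longrightarrow> Dom C (Zer C x y) = x"
  using zer_hom[of x y] by (simp only: hom_iff)
lemma zer_cod[simp]: "x \<in> Obj C \<Longrightarrow> y \<in> Obj C \<Longrightarrow> Cod C (Zer C x y) = y"
  using zer_hom[of x y] by (simp only: hom_iff)
lemma cz_r[simp]: "g \<in> Arr C \<Longrightarrow> x \<in> Obj C \<Longrightarrow> Dom C g = y \<Longrightarrow> g \<cdot> Zer C x y = Zer C x (Cod C g)"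
  using comp_zero_r[of g y "Cod C g" x] by (simp only: hom_iff)
lemma cz_l[simp]: "f \<in> Arr C \<Longrightarrow> z \<in> Obj C \<Longrightarrow> Cod C f = y \<Longrightarrow> Zer C y z \<cdot> f = Zer C (Dom C f) z"
  using comp_zero_l[of f "Dom C f" y z] by (simp only: hom_iff)

lemma add_arr[simp]: "f \<in> Arr C \<Longrightarrow> g \<in> Arr C \<Longrightarrow> Dom C g = Dom C f \<Longrightarrow> Cod C g = Cod C f \<Longrightarrow> f \<oplus> g \<in> Arr C"
  using add_hom[of f "Dom C f" "Cod C f" g] by (simp only: hom_iff)
lemma add_dom[simp]: "f \<in> Arr C \<Longrightarrow> g \<in> Arr C \<Longrightarrow> Dom C g = Dom C f \<Longrightarrow> Cod C g = Cod C f \<Longrightarrow> Dom C (f \<oplus> g) = Dom C f"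
  using add_hom[of f "Dom C f" "Cod C f" g] by (simp only: hom_iff)
lemma add_cod[simp]: "f \<in> Arr C \<Longrightarrow> g \<in> Arr C \<Longrightarrow> Dom C g = Dom C f \<Longrightarrow> Cod C g = Cod C f \<Longrightarrow> Cod C (f \<oplus> g) = Cod C f"
  using add_hom[of f "Dom C f" "Cod C f" g] by (simp only: hom_iff)
lemma neg_arr[simp]: "f \<in> Arr C \<Longrightarrow> Ngt C f \<in> Arr C" using neg_hom[of f "Dom C f" "Cod C f"] by (simp only: hom_iff)
lemma neg_dom[simp]: "f \<in> Arr C \<Longrightarrow> Dom C (Ngt C f) = Dom C f" using neg_hom[of f "Dom C f" "Cod C f"] by (simp only: hom_iff)
lemma neg_cod[simp]: "f \<in> Arr C \<Longrightarrow> Cod C (Ngt C f) = Cod C f" using neg_hom[of f "Dom C f" "Cod C f"] by (simp only: hom_iff)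

lemma distl'[simp]: "f \<in> Arr C \<Longrightarrow> g \<in> Arr C \<Longrightarrow> h \<in> Arr C \<Longrightarrow> Dom C g = Dom C f \<Longrightarrow> Cod C g = Cod C f \<Longrightarrow> Dom C h = Cod C f
  \<Longrightarrow> h \<cdot> (f \<oplus> g) = h \<cdot> f \<oplus> h \<cdot> g"
  using distl[of f "Dom C f" "Cod C f" g h "Cod C h"] by (simp only: hom_iff)
lemma distr'[simp]: "f \<in> Arr C \<Longrightarrow> g \<in> Arr C \<Longrightarrow> h \<in> Arr C \<Longrightarrow> Dom C g = Dom C f \<Longrightarrow> Cod C g = Cod C f \<Longrightarrow> Cod C h = Dom C f
  \<Longrightarrow> (f \<oplus> g) \<cdot> h = f \<cdot> h \<oplus> g \<cdot> h"
  using distr[of f "Dom C f" "Cod C f" g h "Dom C h"] by (simp only: hom_iff)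
lemma negl'[simp]: "f \<in> Arr C \<Longrightarrow> h \<in> Arr C \<Longrightarrow> Cod C h = Dom C f \<Longrightarrow> Ngt C f \<cdot> h = Ngt C (f \<cdot> h)"
  using comp_neg_l[of f "Dom C f" "Cod C f" h "Dom C h"] by (simp only: hom_iff)
lemma negr'[simp]: "f \<in> Arr C \<Longrightarrow> h \<in> Arr C \<Longrightarrow> Dom C h = Cod C f \<Longrightarrow> h \<cdot> Ngt C f = Ngt C (h \<cdot> f)"
  using comp_neg_r[of f "Dom C f" "Cod C f" h "Cod C h"] by (simp only: hom_iff)
lemma add_zero'[simp]: "f \<in> Arr C \<Longrightarrow> Dom C f = x \<Longrightarrow> Cod C f = y \<Longrightarrow> f \<oplus> Zer C x y = f"
  using add_zero[of f x y] by (simp only: hom_iff)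
lemma zero_add'[simp]: "f \<in> Arr C \<Longrightarrow> Dom C f = x \<Longrightarrow> Cod C f = y \<Longrightarrow> Zer C x y \<oplus> f = f"
  using zero_add[of f x y] by (simp only: hom_iff)
lemma add_neg'[simp]: "f \<in> Arr C \<Longrightarrow> f \<ominus> f = Zer C (Dom C f) (Cod C f)"
  using add_neg[of f "Dom C f" "Cod C f"] by (simp only: hom_iff)
lemma neg_zer[simp]: "x \<in> Obj C \<Longrightarrow> y \<in> Obj C \<Longrightarrow> Ngt C (Zer C x y) = Zer C x y"
proof -
  assume xy: "x \<in> Obj C" "y \<in> Obj C"
  have z: "Zer C x y \<in> hom C x y" using zer_hom[OF xy] .
  show ?thesis using neg_unique[OF z z add_zero[OF z]] .
qed
lemma neg_neg'[simp]: "f \<in> Arr C \<Longrightarrow> Ngt C (Ngt C f) = f" using neg_neg[of f "Dom C f" "Cod C f"] by (simp only: hom_iff)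
lemma idl'[simp]: "f \<in> Arr C \<Longrightarrow> Cod C f = y \<Longrightarrow> Idm C y \<cdot> f = f" using idl[of f "Dom C f" y] by (simp only: hom_iff)
lemma idr'[simp]: "f \<in> Arr C \<Longrightarrow> Dom C f = x \<Longrightarrow> f \<cdot> Idm C x = f" using idr[of f x "Cod C f"] by (simp only: hom_iff)
lemma id_arr[simp]: "x \<in> Obj C \<Longrightarrow> Idm C x \<in> Arr C" using id_hom[of x] by (simp only: hom_iff)
lemma id_dom[simp]: "x \<in> Obj C \<Longrightarrow> Dom C (Idm C x) = x" using id_hom[of x] by (simp only: hom_iff)
lemma id_cod[simp]: "x \<in> Obj C \<Longrightarrow> Cod C (Idm C x) = x" using id_hom[of x] by (simp only: hom_iff)

lemma sub_zero_iff: "f \<in> Arr C \<Longrightarrow> g \<in> Arr C \<Longrightarrow> Dom C g = Dom C f \<Longrightarrow> Cod C g = Cod C f \<Longrightarrow>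
   (f \<ominus> g = Zer C (Dom C f) (Cod C f)) = (f = g)"
  using sub_eq_zero[of f "Dom C f" "Cod C f" g] by (simp only: hom_iff)

end

lemma (in abc) assoc_eq: "f \<in> Arr C \<Longrightarrow> g \<in> Arr C \<Longrightarrow> Dom C g = Cod C f \<Longrightarrow> X \<in> Arr C \<Longrightarrow> Cod C X = Dom C f
   \<Longrightarrow> g \<cdot> f = h \<Longrightarrow> g \<cdot> (f \<cdot> X) = h \<cdot> X"
  using assoc_r[of X f g] by simp

locale sit = abc +
  fixes a b b' u0 u1 k k' \<phi> q q' \<psi>
  assumes a_arr[simp]: "a \<in> Arr C" and b_arr[simp]: "b \<in> Arr C" and b'_arr[simp]: "b' \<in> Arr C"
    and u: "(u0, u1) \<in> arr_hom C b b'"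
    and kk: "is_kernel C b k" and kk': "is_kernel C b' k'"
    and phi: "\<phi> \<in> hom C (Dom C k) (Dom C k')" and phik: "Cmp C k' \<phi> = Cmp C u1 k" and phiiso: "is_iso C \<phi>"
    and qq: "is_cokernel C b q" and qq': "is_cokernel C b' q'"
    and psi: "\<psi> \<in> hom C (Cod C q) (Cod C q')" and psiq: "Cmp C \<psi> q = Cmp C q' u0" and psiiso: "is_iso C \<psi>"
    and proj: "projective C (Cod C a)"
begin

lemma u0[simp]: "u0 \<in> Arr C" "Dom C u0 = Cod C b" "Cod C u0 = Cod C b'"
  using u unfolding arr_hom_def hom_def by auto
lemma u1[simp]: "u1 \<in> Arr C" "Dom C u1 = Dom C b" "Cod C u1 = Dom C b'"
  using u unfolding arr_hom_def hom_def by auto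
lemma usq: "b' \<cdot> u1 = u0 \<cdot> b" using u unfolding arr_hom_def by auto
lemma usq'[simp]: "X \<in> Arr C \<Longrightarrow> Cod C X = Dom C b \<Longrightarrow> b' \<cdot> (u1 \<cdot> X) = u0 \<cdot> (b \<cdot> X)"
  using assoc_eq[OF u1(1) b'_arr _ _ _ usq] by simp

lemma k[simp]: "k \<in> Arr C" "Cod C k = Dom C b"
  using kk unfolding is_kernel_def by auto
lemma k'[simp]: "k' \<in> Arr C" "Cod C k' = Dom C b'"
  using kk' unfolding is_kernel_def by auto
lemma bk: "b \<cdot> k = Zer C (Dom C k) (Cod C b)" using kk unfolding is_kernel_def by auto
lemma bk'[simp]: "X \<in> Arr C \<Longrightarrow> Cod C X = Dom C k \<Longrightarrow> b \<cdot> (k \<cdot> X) = Zer C (Dom C X) (Cod C b)"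
  using assoc_eq[OF k(1) b_arr _ _ _ bk] by simp
lemma b'k: "b' \<cdot> k' = Zer C (Dom C k') (Cod C b')" using kk' unfolding is_kernel_def by auto
lemma b'k'[simp]: "X \<in> Arr C \<Longrightarrow> Cod C X = Dom C k' \<Longrightarrow> b' \<cdot> (k' \<cdot> X) = Zer C (Dom C X) (Cod C b')"
  using assoc_eq[OF k'(1) b'_arr _ _ _ b'k] by simp

lemma q[simp]: "q \<in> Arr C" "Dom C q = Cod C b"
  using qq unfolding is_cokernel_def by auto
lemma q'[simp]: "q' \<in> Arr C" "Dom C q' = Cod C b'"
  using qq' unfolding is_cokernel_def by auto
lemma qb: "q \<cdot> b = Zer C (Dom C b) (Cod C q)" using qq unfolding is_cokernel_def by auto
lemma qb'[simp]: "X \<in> Arr C \<Longrightarrow> Cod C X = Dom C b \<Longrightarrow> q \<cdot> (b \<cdot> X) = Zer C (Dom C X) (Cod C q)"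
  using assoc_eq[OF b_arr q(1) _ _ _ qb] by simp
lemma q'b': "q' \<cdot> b' = Zer C (Dom C b') (Cod C q')" using qq' unfolding is_cokernel_def by auto
lemma q'b''[simp]: "X \<in> Arr C \<Longrightarrow> Cod C X = Dom C b' \<Longrightarrow> q' \<cdot> (b' \<cdot> X) = Zer C (Dom C X) (Cod C q')"
  using assoc_eq[OF b'_arr q'(1) _ _ _ q'b'] by simp

lemma phi'[simp]: "\<phi> \<in> Arr C" "Dom C \<phi> = Dom C k" "Cod C \<phi> = Dom C k'" using phi by (auto simp: hom_def)
lemma psi'[simp]: "\<psi> \<in> Arr C" "Dom C \<psi> = Cod C q" "Cod C \<psi> = Cod C q'" using psi by (auto simp: hom_def)
lemma phik'[simp]: "X \<in> Arr C \<Longrightarrow> Cod C X = Dom C k \<Longrightarrow> k' \<cdot> (\<phi> \<cdot> X) = u1 \<cdot> (k \<cdot> X)"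
  using assoc_eq[OF phi'(1) k'(1) _ _ _ phik] by simp
lemma psiq'[simp]: "X \<in> Arr C \<Longrightarrow> Cod C X = Cod C b \<Longrightarrow> \<psi> \<cdot> (q \<cdot> X) = q' \<cdot> (u0 \<cdot> X)"
  using assoc_eq[OF q(1) psi'(1) _ _ _ psiq] by simp

definition "phii = (SOME g. g \<in> hom C (Dom C k') (Dom C k) \<and> g \<cdot> \<phi> = Idm C (Dom C k) \<and> \<phi> \<cdot> g = Idm C (Dom C k'))"
lemma phii: "phii \<in> hom C (Dom C k') (Dom C k) \<and> phii \<cdot> \<phi> = Idm C (Dom C k) \<and> \<phi> \<cdot> phii = Idm C (Dom C k')"
proof -
  have "\<exists>g. g \<in> hom C (Dom C k') (Dom C k) \<and> g \<cdot> \<phi> = Idm C (Dom C k) \<and> \<phi> \<cdot> g = Idm C (Dom C k')"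
    using phiiso unfolding is_iso_def by auto
  thus ?thesis unfolding phii_def by (rule someI_ex)
qed
lemma phii'[simp]: "phii \<in> Arr C" "Dom C phii = Dom C k'" "Cod C phii = Dom C k"
  using phii by (auto simp: hom_def)
lemma phii2[simp]: "X \<in> Arr C \<Longrightarrow> Cod C X = Dom C k \<Longrightarrow> phii \<cdot> (\<phi> \<cdot> X) = X"
  using assoc_eq[OF phi'(1) phii'(1) _ _ _ conjunct1[OF conjunct2[OF phii]]] by simp
lemma phii3[simp]: "X \<in> Arr C \<Longrightarrow> Cod C X = Dom C k' \<Longrightarrow> \<phi> \<cdot> (phii \<cdot> X) = X"
  using assoc_eq[OF phii'(1) phi'(1) _ _ _ conjunct2[OF conjunct2[OF phii]]] by simp

definition "psii = (SOME g. g \<in> hom C (Cod C q') (Cod C q) \<and> g \<cdot> \<psi> = Idm C (Cod C q) \<and> \<psi> \<cdot> g = Idm C (Cod C q'))"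
lemma psii: "psii \<in> hom C (Cod C q') (Cod C q) \<and> psii \<cdot> \<psi> = Idm C (Cod C q) \<and> \<psi> \<cdot> psii = Idm C (Cod C q')"
proof -
  have "\<exists>g. g \<in> hom C (Cod C q') (Cod C q) \<and> g \<cdot> \<psi> = Idm C (Cod C q) \<and> \<psi> \<cdot> g = Idm C (Cod C q')"
    using psiiso unfolding is_iso_def by auto
  thus ?thesis unfolding psii_def by (rule someI_ex)
qed
lemma psii'[simp]: "psii \<in> Arr C" "Dom C psii = Cod C q'" "Cod C psii = Cod C q"
  using psii by (auto simp: hom_def)
lemma psii2[simp]: "X \<in> Arr C \<Longrightarrow> Cod C X = Cod C q \<Longrightarrow> psii \<cdot> (\<psi> \<cdot> X) = X"
  using assoc_eq[OF psi'(1) psii'(1) _ _ _ conjunct1[OF conjunct2[OF psii]]] by simp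
lemma psii3[simp]: "X \<in> Arr C \<Longrightarrow> Cod C X = Cod C q' \<Longrightarrow> \<psi> \<cdot> (psii \<cdot> X) = X"
  using assoc_eq[OF psii'(1) psi'(1) _ _ _ conjunct2[OF conjunct2[OF psii]]] by simp

end

context sit begin

lemma faith:
  assumes t: "t \<in> Arr C" "Cod C t = Dom C b" and t': "t' \<in> Arr C" "Dom C t' = Dom C t" "Cod C t' = Dom C b"
    and e1: "b \<cdot> t = b \<cdot> t'" and e2: "u1 \<cdot> t = u1 \<cdot> t'"
  shows "t = t'"
proof -
  define s where "s = t \<ominus> t'"
  have s: "s \<in> Arr C" "Dom C s = Dom C t" "Cod C s = Dom C b" unfolding s_def using t t' by simp_all
  have bs: "b \<cdot> s = Zer C (Dom C t) (Cod C b)" unfolding s_def using t t' e1 by simp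
  have u1s: "u1 \<cdot> s = Zer C (Dom C t) (Dom C b')" unfolding s_def using t t' e2 by simp
  obtain v where v: "v \<in> hom C (Dom C t) (Dom C k)" "k \<cdot> v = s"
    using ker_fact[OF kk arr_hom[OF b_arr] homI[OF s] bs] by blast
  have v': "v \<in> Arr C" "Dom C v = Dom C t" "Cod C v = Dom C k" using v(1) by (simp_all add: hom_def)
  have "k' \<cdot> (\<phi> \<cdot> v) = k' \<cdot> Zer C (Dom C t) (Dom C k')"
    using v' t u1s v(2)[symmetric] by simp
  hence "\<phi> \<cdot> v = Zer C (Dom C t) (Dom C k')"
    using mono_canc[OF ker_mono[OF kk'], of "\<phi> \<cdot> v" "Dom C t" "Zer C (Dom C t) (Dom C k')"] v' t
    by (simp add: hom_def)
  hence "v = Zer C (Dom C t) (Dom C k)" using phii2[OF v'(1,3)] v' t by simp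
  hence "s = Zer C (Dom C t) (Dom C b)" using v(2) t by simp
  thus ?thesis using sub_zero_iff[OF t(1) t'(1)] t t' unfolding s_def by simp
qed

lemma qrefl:
  assumes y: "y \<in> Arr C" "Cod C y = Cod C b" and z: "q' \<cdot> (u0 \<cdot> y) = Zer C (Dom C y) (Cod C q')"
  shows "q \<cdot> y = Zer C (Dom C y) (Cod C q)"
proof -
  have "q \<cdot> y = psii \<cdot> (\<psi> \<cdot> (q \<cdot> y))" using y by (simp del: psiq')
  also have "\<psi> \<cdot> (q \<cdot> y) = Zer C (Dom C y) (Cod C q')" using y z by simp
  finally show ?thesis using y by simp
qed

lemma klift:
  assumes s: "s \<in> Arr C" "Cod C s = Dom C b'" and z: "b' \<cdot> s = Zer C (Dom C s) (Cod C b')"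
  shows "\<exists>t. t \<in> Arr C \<and> Dom C t = Dom C s \<and> Cod C t = Dom C b \<and> b \<cdot> t = Zer C (Dom C s) (Cod C b) \<and> u1 \<cdot> t = s"
proof -
  obtain v where v: "v \<in> hom C (Dom C s) (Dom C k')" "k' \<cdot> v = s"
    using ker_fact[OF kk' arr_hom[OF b'_arr] homI[OF s(1) refl s(2)] z] by blast
  have v': "v \<in> Arr C" "Dom C v = Dom C s" "Cod C v = Dom C k'" using v(1) by (simp_all add: hom_def)
  have "u1 \<cdot> (k \<cdot> (phii \<cdot> v)) = k' \<cdot> (\<phi> \<cdot> (phii \<cdot> v))" using v' by (simp del: phii3)
  also have "\<dots> = s" using v' v(2) by (simp del: phik')
  finally show ?thesis using v' by (intro exI[of _ "k \<cdot> (phii \<cdot> v)"]) simp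
qed

lemma blift:
  assumes f: "f \<in> Arr C" and cq: "is_cokernel C f qq0" and d: "d \<in> Arr C" "Dom C d = Cod C a" "Cod C d = Cod C f"
    and z: "qq0 \<cdot> d = Zer C (Cod C a) (Cod C qq0)"
  shows "\<exists>\<gamma>. \<gamma> \<in> Arr C \<and> Dom C \<gamma> = Cod C a \<and> Cod C \<gamma> = Dom C f \<and> f \<cdot> \<gamma> = d"
  using proj_lift[OF proj arr_hom[OF f] cq homI[OF d] z] by (auto simp: hom_def)

end

lemma (in abc) biprod: "x \<in> Obj C \<Longrightarrow> y \<in> Obj C \<Longrightarrow> has_biproduct C x y"
  using ab[unfolded abelian_category_def, THEN conjunct2, THEN conjunct2, THEN conjunct1] by blast

context sit begin

lemma pb:
  assumes x: "x \<in> Arr C" "Cod C x = Dom C b'" and y: "y \<in> Arr C" "Dom C y = Dom C x" "Cod C y = Cod C b"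
    and e: "b' \<cdot> x = u0 \<cdot> y"
  shows "\<exists>f1. f1 \<in> Arr C \<and> Dom C f1 = Dom C x \<and> Cod C f1 = Dom C b \<and> b \<cdot> f1 = y \<and> u1 \<cdot> f1 = x"
proof -
  obtain D i1 i2 p1 p2 where D: "D \<in> Obj C" and
    i1: "i1 \<in> hom C (Cod C b) D" and i2: "i2 \<in> hom C (Dom C b') D"
    and p1: "p1 \<in> hom C D (Cod C b)" and p2: "p2 \<in> hom C D (Dom C b')"
    and p1i1: "p1 \<cdot> i1 = Idm C (Cod C b)" and p2i2: "p2 \<cdot> i2 = Idm C (Dom C b')"
    and sum: "i1 \<cdot> p1 \<oplus> i2 \<cdot> p2 = Idm C D"
    using biprod[of "Cod C b" "Dom C b'"] unfolding has_biproduct_def by auto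
  have [simp]: "i1 \<in> Arr C" "Dom C i1 = Cod C b" "Cod C i1 = D" "i2 \<in> Arr C" "Dom C i2 = Dom C b'" "Cod C i2 = D"
    "p1 \<in> Arr C" "Dom C p1 = D" "Cod C p1 = Cod C b" "p2 \<in> Arr C" "Dom C p2 = D" "Cod C p2 = Dom C b'"
    using i1 i2 p1 p2 by (simp_all add: hom_def)
  have [simp]: "D \<in> Obj C" using D .
  have p1i1'[simp]: "\<And>X. X \<in> Arr C \<Longrightarrow> Cod C X = Cod C b \<Longrightarrow> p1 \<cdot> (i1 \<cdot> X) = X"
    using assoc_eq[of i1 p1 _ "Idm C (Cod C b)", OF _ _ _ _ _ p1i1] by simp
  have p2i2'[simp]: "\<And>X. X \<in> Arr C \<Longrightarrow> Cod C X = Dom C b' \<Longrightarrow> p2 \<cdot> (i2 \<cdot> X) = X"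
    using assoc_eq[of i2 p2 _ "Idm C (Dom C b')", OF _ _ _ _ _ p2i2] by simp
  have sum': "\<And>X. X \<in> Arr C \<Longrightarrow> Cod C X = D \<Longrightarrow> X = i1 \<cdot> (p1 \<cdot> X) \<oplus> i2 \<cdot> (p2 \<cdot> X)"
  proof -
    fix X assume X: "X \<in> Arr C" "Cod C X = D"
    have "X = (i1 \<cdot> p1 \<oplus> i2 \<cdot> p2) \<cdot> X" using sum X by simp
    also have "\<dots> = i1 \<cdot> (p1 \<cdot> X) \<oplus> i2 \<cdot> (p2 \<cdot> X)" using X by simp
    finally show "X = i1 \<cdot> (p1 \<cdot> X) \<oplus> i2 \<cdot> (p2 \<cdot> X)" .
  qed
  have "i2 \<cdot> (p2 \<cdot> i1) = Zer C (Cod C b) D"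
  proof -
    have "i1 \<oplus> Zer C (Cod C b) D = i1 \<oplus> i2 \<cdot> (p2 \<cdot> i1)" using sum'[of i1] p1i1 by simp
    thus ?thesis using add_cancel_l[of i1 "Cod C b" D "Zer C (Cod C b) D" "i2 \<cdot> (p2 \<cdot> i1)"]
      by (simp add: hom_def)
  qed
  hence "p2 \<cdot> (i2 \<cdot> (p2 \<cdot> i1)) = Zer C (Cod C b) (Dom C b')" by simp
  hence p2i1: "p2 \<cdot> i1 = Zer C (Cod C b) (Dom C b')" by simp
  have "i1 \<cdot> (p1 \<cdot> i2) = Zer C (Dom C b') D"
  proof -
    have "i2 = i1 \<cdot> (p1 \<cdot> i2) \<oplus> i2" using sum'[of i2] p2i2 by simp
    also have "\<dots> = i2 \<oplus> i1 \<cdot> (p1 \<cdot> i2)" using add_comm[of "i1 \<cdot> (p1 \<cdot> i2)" "Dom C b'" D i2] by (simp add: hom_def)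
    finally have "i2 \<oplus> Zer C (Dom C b') D = i2 \<oplus> i1 \<cdot> (p1 \<cdot> i2)" by simp
    thus ?thesis using add_cancel_l[of i2 "Dom C b'" D "Zer C (Dom C b') D" "i1 \<cdot> (p1 \<cdot> i2)"]
      by (simp add: hom_def)
  qed
  hence "p1 \<cdot> (i1 \<cdot> (p1 \<cdot> i2)) = Zer C (Dom C b') (Cod C b)" by simp
  hence p1i2: "p1 \<cdot> i2 = Zer C (Dom C b') (Cod C b)" by simp
  have p2i1'[simp]: "\<And>X. X \<in> Arr C \<Longrightarrow> Cod C X = Cod C b \<Longrightarrow> p2 \<cdot> (i1 \<cdot> X) = Zer C (Dom C X) (Dom C b')"
    using assoc_eq[of i1 p2, OF _ _ _ _ _ p2i1] by simp
  have p1i2'[simp]: "\<And>X. X \<in> Arr C \<Longrightarrow> Cod C X = Dom C b' \<Longrightarrow> p1 \<cdot> (i2 \<cdot> X) = Zer C (Dom C X) (Cod C b)"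
    using assoc_eq[of i2 p1, OF _ _ _ _ _ p1i2] by simp
  define \<delta> where "\<delta> = u0 \<cdot> p1 \<ominus> b' \<cdot> p2"
  have \<delta>[simp]: "\<delta> \<in> Arr C" "Dom C \<delta> = D" "Cod C \<delta> = Cod C b'" unfolding \<delta>_def by simp_all
  obtain \<kappa> where kap: "is_kernel C \<delta> \<kappa>" using has_ker[OF arr_hom[OF \<delta>(1)]] by blast
  define P where "P = Dom C \<kappa>"
  have kaph: "\<kappa> \<in> hom C P D" unfolding P_def using ker_hom[OF kap arr_hom[OF \<delta>(1)]] by simp
  have [simp]: "\<kappa> \<in> Arr C" "Dom C \<kappa> = P" "Cod C \<kappa> = D" using kaph by (simp_all add: hom_def)
  have [simp]: "P \<in> Obj C" using hom_obj1[OF kaph] .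
  have dk: "\<delta> \<cdot> \<kappa> = Zer C P (Cod C b')" using ker_zero[OF kap arr_hom[OF \<delta>(1)]] by simp
  have dk2: "u0 \<cdot> (p1 \<cdot> \<kappa>) = b' \<cdot> (p2 \<cdot> \<kappa>)"
  proof -
    have "u0 \<cdot> (p1 \<cdot> \<kappa>) \<ominus> b' \<cdot> (p2 \<cdot> \<kappa>) = Zer C P (Cod C b')" using dk unfolding \<delta>_def by simp
    thus ?thesis using sub_zero_iff[of "u0 \<cdot> (p1 \<cdot> \<kappa>)" "b' \<cdot> (p2 \<cdot> \<kappa>)"] by simp
  qed
  define j where "j = i1 \<cdot> b \<oplus> i2 \<cdot> u1"
  have j[simp]: "j \<in> Arr C" "Dom C j = Dom C b" "Cod C j = D" unfolding j_def by simp_all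
  have pj1[simp]: "\<And>X. X \<in> Arr C \<Longrightarrow> Cod C X = Dom C b \<Longrightarrow> p1 \<cdot> (j \<cdot> X) = b \<cdot> X" unfolding j_def by simp
  have pj2[simp]: "\<And>X. X \<in> Arr C \<Longrightarrow> Cod C X = Dom C b \<Longrightarrow> p2 \<cdot> (j \<cdot> X) = u1 \<cdot> X" unfolding j_def by simp
  have "\<delta> \<cdot> j = Zer C (Dom C b) (Cod C b')" unfolding \<delta>_def j_def by (simp add: usq)
  then obtain j' where j'h: "j' \<in> hom C (Dom C b) P" and kj: "\<kappa> \<cdot> j' = j"
    using ker_fact[OF kap homI[OF \<delta>] homI[OF j]] unfolding P_def by auto
  have j'[simp]: "j' \<in> Arr C" "Dom C j' = Dom C b" "Cod C j' = P" using j'h by (simp_all add: hom_def)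
  have kj'[simp]: "\<And>X. X \<in> Arr C \<Longrightarrow> Cod C X = Dom C b \<Longrightarrow> \<kappa> \<cdot> (j' \<cdot> X) = j \<cdot> X"
    using assoc_eq[of j' \<kappa>, OF _ _ _ _ _ kj] by simp
  have pj1'[simp]: "p1 \<cdot> j = b" using pj1[of "Idm C (Dom C b)"] by simp
  have pj2'[simp]: "p2 \<cdot> j = u1" using pj2[of "Idm C (Dom C b)"] by simp
  define z where "z = i1 \<cdot> y \<oplus> i2 \<cdot> x"
  have z[simp]: "z \<in> Arr C" "Dom C z = Dom C x" "Cod C z = D" unfolding z_def using x y by simp_all
  have "\<delta> \<cdot> z = Zer C (Dom C x) (Cod C b')" unfolding \<delta>_def z_def using x y e by simp
  then obtain z' where z'h: "z' \<in> hom C (Dom C x) P" and kz: "\<kappa> \<cdot> z' = z"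
    using ker_fact[OF kap homI[OF \<delta>] homI[OF z]] unfolding P_def by auto
  have z'[simp]: "z' \<in> Arr C" "Dom C z' = Dom C x" "Cod C z' = P" using z'h by (simp_all add: hom_def)
  have pz1: "p1 \<cdot> z = y" unfolding z_def using x y by simp
  have pz2: "p2 \<cdot> z = x" unfolding z_def using x y by simp
  have j'mono: "is_mono C j'"
  proof (rule mono_I[OF j'h])
    fix V d assume d: "d \<in> hom C V (Dom C b)" "j' \<cdot> d = Zer C V P"
    have [simp]: "d \<in> Arr C" "Dom C d = V" "Cod C d = Dom C b" using d(1) by (simp_all add: hom_def)
    have [simp]: "V \<in> Obj C" using hom_obj1[OF d(1)] .
    have jd: "j \<cdot> d = Zer C V D" using kj'[of d] d(2) by simp
    have "b \<cdot> d = Zer C V (Cod C b)" using pj1[of d] jd by simp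
    moreover have "u1 \<cdot> d = Zer C V (Dom C b')" using pj2[of d] jd by simp
    ultimately show "d = Zer C V (Dom C b)"
      using faith[of d "Zer C V (Dom C b)"] by simp
  qed
  obtain m where km: "is_kernel C q m" using has_ker[OF arr_hom[OF q(1)]] by blast
  define I where "I = Dom C m"
  have mh: "m \<in> hom C I (Cod C b)" unfolding I_def using ker_hom[OF km homI[OF q(1) q(2) refl]] .
  have [simp]: "m \<in> Arr C" "Dom C m = I" "Cod C m = Cod C b" using mh by (simp_all add: hom_def)
  have [simp]: "I \<in> Obj C" using hom_obj1[OF mh] .
  obtain e where eh: "e \<in> hom C (Dom C b) I" and me: "m \<cdot> e = b" and epe: "is_epi C e"
    using img[OF homI[OF b_arr refl refl] qq km] unfolding I_def by blast
  have [simp]: "e \<in> Arr C" "Dom C e = Dom C b" "Cod C e = I" using eh by (simp_all add: hom_def)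
  have mmono: "is_mono C m" using ker_mono[OF km] .
  have "q \<cdot> (p1 \<cdot> \<kappa>) = Zer C P (Cod C q)"
    using qrefl[of "p1 \<cdot> \<kappa>"] dk2 by simp
  then obtain \<pi> where \<pi>h: "\<pi> \<in> hom C P I" and m\<pi>: "m \<cdot> \<pi> = p1 \<cdot> \<kappa>"
    using ker_fact[OF km homI[OF q(1) q(2) refl], of "p1 \<cdot> \<kappa>" P] unfolding I_def by (auto simp: hom_def)
  have [simp]: "\<pi> \<in> Arr C" "Dom C \<pi> = P" "Cod C \<pi> = I" using \<pi>h by (simp_all add: hom_def)
  have m\<pi>'[simp]: "\<And>X. X \<in> Arr C \<Longrightarrow> Cod C X = P \<Longrightarrow> m \<cdot> (\<pi> \<cdot> X) = p1 \<cdot> (\<kappa> \<cdot> X)"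
    using assoc_eq[of \<pi> m, OF _ _ _ _ _ m\<pi>] by simp
  have \<pi>j: "\<pi> \<cdot> j' = e"
  proof -
    have "m \<cdot> (\<pi> \<cdot> j') = m \<cdot> e" using me m\<pi>'[of j'] kj by simp
    thus ?thesis using mono_canc[OF mmono, of "\<pi> \<cdot> j'" "Dom C b" e] by (simp add: hom_def)
  qed
  have \<pi>j'[simp]: "\<And>X. X \<in> Arr C \<Longrightarrow> Cod C X = Dom C b \<Longrightarrow> \<pi> \<cdot> (j' \<cdot> X) = e \<cdot> X"
    using assoc_eq[of j' \<pi>, OF _ _ _ _ _ \<pi>j] by simp
  have ecanc: "\<And>G g. g \<in> hom C I G \<Longrightarrow> g \<cdot> e = Zer C (Dom C b) G \<Longrightarrow> g = Zer C I G"
  proof -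
    fix G g assume g: "g \<in> hom C I G" "g \<cdot> e = Zer C (Dom C b) G"
    have [simp]: "g \<in> Arr C" "Dom C g = I" "Cod C g = G" using g(1) by (simp_all add: hom_def)
    have [simp]: "G \<in> Obj C" using hom_obj2[OF g(1)] .
    have "g \<cdot> e = Zer C I G \<cdot> e" using g(2) by simp
    thus "g = Zer C I G" using epi_canc[OF epe, of g G "Zer C I G"] by (simp add: hom_def)
  qed
  have \<pi>epi: "is_epi C \<pi>"
  proof (rule epi_I[OF \<pi>h])
    fix G d assume d: "d \<in> hom C I G" "d \<cdot> \<pi> = Zer C P G"
    have [simp]: "d \<in> Arr C" "Dom C d = I" "Cod C d = G" using d(1) by (simp_all add: hom_def)
    have [simp]: "G \<in> Obj C" using hom_obj2[OF d(1)] .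
    have "d \<cdot> e = (d \<cdot> \<pi>) \<cdot> j'" using \<pi>j by simp
    also have "\<dots> = Zer C (Dom C b) G" using d(2) by simp
    finally show "d = Zer C I G" using ecanc[OF d(1)] by simp
  qed
  have j'epi: "is_epi C j'"
  proof (rule epi_I[OF j'h])
    fix G g assume g: "g \<in> hom C P G" "g \<cdot> j' = Zer C (Dom C b) G"
    have [simp]: "g \<in> Arr C" "Dom C g = P" "Cod C g = G" using g(1) by (simp_all add: hom_def)
    have [simp]: "G \<in> Obj C" using hom_obj2[OF g(1)] .
    have gj'[simp]: "\<And>X. X \<in> Arr C \<Longrightarrow> Cod C X = Dom C b \<Longrightarrow> g \<cdot> (j' \<cdot> X) = Zer C (Dom C X) G"
      using assoc_eq[of j' g, OF _ _ _ _ _ g(2)] by simp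
    obtain \<kappa>' where k': "is_kernel C \<pi> \<kappa>'" using has_ker[OF \<pi>h] by blast
    define N where "N = Dom C \<kappa>'"
    have k'h: "\<kappa>' \<in> hom C N P" unfolding N_def using ker_hom[OF k' \<pi>h] .
    have [simp]: "\<kappa>' \<in> Arr C" "Dom C \<kappa>' = N" "Cod C \<kappa>' = P" using k'h by (simp_all add: hom_def)
    have [simp]: "N \<in> Obj C" using hom_obj1[OF k'h] .
    have pk': "\<pi> \<cdot> \<kappa>' = Zer C N I" using ker_zero[OF k' \<pi>h] unfolding N_def .
    have p1kk: "p1 \<cdot> (\<kappa> \<cdot> \<kappa>') = Zer C N (Cod C b)"
      using m\<pi>'[of \<kappa>'] pk' by simp
    define w where "w = p2 \<cdot> (\<kappa> \<cdot> \<kappa>')"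
    have [simp]: "w \<in> Arr C" "Dom C w = N" "Cod C w = Dom C b'" unfolding w_def by simp_all
    have kkw: "\<kappa> \<cdot> \<kappa>' = i2 \<cdot> w"
      using sum'[of "\<kappa> \<cdot> \<kappa>'"] p1kk unfolding w_def by simp
    have "u0 \<cdot> (p1 \<cdot> (\<kappa> \<cdot> \<kappa>')) = (u0 \<cdot> (p1 \<cdot> \<kappa>)) \<cdot> \<kappa>'" by simp
    also have "\<dots> = (b' \<cdot> (p2 \<cdot> \<kappa>)) \<cdot> \<kappa>'" using dk2 by simp
    also have "\<dots> = b' \<cdot> (p2 \<cdot> (\<kappa> \<cdot> \<kappa>'))" by simp
    finally have "u0 \<cdot> (p1 \<cdot> (\<kappa> \<cdot> \<kappa>')) = b' \<cdot> (p2 \<cdot> (\<kappa> \<cdot> \<kappa>'))" .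
    hence b'w: "b' \<cdot> w = Zer C N (Cod C b')" using p1kk unfolding w_def by simp
    obtain t where t: "t \<in> Arr C" "Dom C t = N" "Cod C t = Dom C b" "b \<cdot> t = Zer C N (Cod C b)" "u1 \<cdot> t = w"
      using klift[of w] b'w by auto
    have "j \<cdot> t = i2 \<cdot> w" unfolding j_def using t by simp
    hence "\<kappa> \<cdot> (j' \<cdot> t) = \<kappa> \<cdot> \<kappa>'" using kj'[OF t(1) t(3)] kkw by simp
    hence jt: "j' \<cdot> t = \<kappa>'"
      using mono_canc[OF ker_mono[OF kap], of "j' \<cdot> t" N \<kappa>'] t by (simp add: hom_def)
    have gk: "g \<cdot> \<kappa>' = Zer C (Dom C \<kappa>') G" using gj'[OF t(1) t(3)] jt t by simp
    obtain g' where g'h: "g' \<in> hom C I G" and g'p: "g' \<cdot> \<pi> = g"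
      using epi_is_coker[OF \<pi>epi \<pi>h k' g(1) gk] by blast
    have [simp]: "g' \<in> Arr C" "Dom C g' = I" "Cod C g' = G" using g'h by (simp_all add: hom_def)
    have "g' \<cdot> e = g' \<cdot> (\<pi> \<cdot> j')" using \<pi>j by simp
    also have "\<dots> = g \<cdot> j'" by (simp add: g'p[symmetric])
    finally have "g' = Zer C I G" using ecanc[OF g'h] g(2) by simp
    thus "g = Zer C P G" using g'p by simp
  qed
  obtain H where H: "is_kernel C H j'" using mono_ker[OF j'mono] by blast
  have "Dom C H = P" using ker_dom[OF H] by simp
  hence Hh: "H \<in> hom C P (Cod C H)" using arr_hom[OF ker_arr[OF H]] by simp
  have [simp]: "H \<in> Arr C" "Dom C H = P" using Hh by (simp_all add: hom_def)
  have "H \<cdot> j' = Zer C (Dom C b) (Cod C H)" using ker_zero[OF H Hh] by simp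
  hence "H \<cdot> j' = Zer C P (Cod C H) \<cdot> j'" by simp
  hence H0: "H = Zer C P (Cod C H)" using epi_canc[OF j'epi, of H "Cod C H" "Zer C P (Cod C H)"] by (simp add: hom_def)
  have "H \<cdot> z' = Zer C P (Cod C H) \<cdot> z'" using H0 by (rule arg_cong[where f="\<lambda>h. h \<cdot> z'"])
  also have "\<dots> = Zer C (Dom C x) (Cod C H)" by simp
  finally have "H \<cdot> z' = Zer C (Dom C x) (Cod C H)" .
  then obtain f1 where f1h: "f1 \<in> hom C (Dom C x) (Dom C b)" and jf: "j' \<cdot> f1 = z'"
    using ker_fact[OF H Hh z'h] by (auto simp: hom_def)
  have [simp]: "f1 \<in> Arr C" "Dom C f1 = Dom C x" "Cod C f1 = Dom C b" using f1h by (simp_all add: hom_def)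
  have "b \<cdot> f1 = y" using pj1[of f1] kj'[of f1] jf kz pz1 by simp
  moreover have "u1 \<cdot> f1 = x" using pj2[of f1] kj'[of f1] jf kz pz2 by simp
  ultimately show ?thesis by (intro exI[of _ f1]) simp
qed

end

context abc begin

lemma add_assoc_a: "f \<in> Arr C \<Longrightarrow> g \<in> Arr C \<Longrightarrow> h \<in> Arr C \<Longrightarrow> Dom C g = Dom C f \<Longrightarrow> Cod C g = Cod C f
  \<Longrightarrow> Dom C h = Dom C f \<Longrightarrow> Cod C h = Cod C f \<Longrightarrow> f \<oplus> g \<oplus> h = f \<oplus> (g \<oplus> h)"
  using add_assoc[of f "Dom C f" "Cod C f" g h] by (simp only: hom_iff)
lemma add_comm_a: "f \<in> Arr C \<Longrightarrow> g \<in> Arr C \<Longrightarrow> Dom C g = Dom C f \<Longrightarrow> Cod C g = Cod C f \<Longrightarrow> f \<oplus> g = g \<oplus> f"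
  using add_comm[of f "Dom C f" "Cod C f" g] by (simp only: hom_iff)
lemma neg_add_l: "f \<in> Arr C \<Longrightarrow> Ngt C f \<oplus> f = Zer C (Dom C f) (Cod C f)"
  using add_comm_a[of "Ngt C f" f] by simp
lemma canc1: "f \<in> Arr C \<Longrightarrow> g \<in> Arr C \<Longrightarrow> Dom C g = Dom C f \<Longrightarrow> Cod C g = Cod C f \<Longrightarrow> Ngt C f \<oplus> (f \<oplus> g) = g"
  using add_assoc_a[of "Ngt C f" f g] neg_add_l[of f] by simp
lemma canc2: "f \<in> Arr C \<Longrightarrow> g \<in> Arr C \<Longrightarrow> Dom C g = Dom C f \<Longrightarrow> Cod C g = Cod C f \<Longrightarrow> f \<oplus> (Ngt C f \<oplus> g) = g"
  using add_assoc_a[of f "Ngt C f" g] by simp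
lemma canc3: assumes "f \<in> Arr C" "g \<in> Arr C" "Dom C g = Dom C f" "Cod C g = Cod C f" shows "f \<oplus> (g \<oplus> Ngt C f) = g"
proof -
  have "f \<oplus> (g \<oplus> Ngt C f) = f \<oplus> (Ngt C f \<oplus> g)" using add_comm_a[of g "Ngt C f"] assms by simp
  thus ?thesis using canc2 assms by simp
qed
lemma canc4: "f \<in> Arr C \<Longrightarrow> Ngt C f \<oplus> f = Zer C (Dom C f) (Cod C f)" using neg_add_l .
lemma neg_add_a: assumes "f \<in> Arr C" "g \<in> Arr C" "Dom C g = Dom C f" "Cod C g = Cod C f"
  shows "Ngt C (f \<oplus> g) = Ngt C f \<oplus> Ngt C g"
proof -
  have "(f \<oplus> g) \<oplus> (Ngt C f \<oplus> Ngt C g) = f \<oplus> (g \<oplus> (Ngt C f \<oplus> Ngt C g))" using assms add_assoc_a by simp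
  also have "g \<oplus> (Ngt C f \<oplus> Ngt C g) = Ngt C f \<oplus> (g \<oplus> Ngt C g)"
    using assms add_assoc_a[of g "Ngt C f" "Ngt C g"] add_assoc_a[of "Ngt C f" g "Ngt C g"] add_comm_a[of g "Ngt C f"] by simp
  finally have "(f \<oplus> g) \<oplus> (Ngt C f \<oplus> Ngt C g) = Zer C (Dom C f) (Cod C f)" using assms by simp
  thus ?thesis using neg_unique[of "f \<oplus> g" "Dom C f" "Cod C f" "Ngt C f \<oplus> Ngt C g"] assms by (simp add: hom_def)
qed

lemmas gsimps = add_assoc_a canc1 canc2 canc3 canc4 neg_add_a

end

context sit begin

abbreviation "F \<equiv> postcomp_obj C (u0, u1)"

lemma arr_homD: "f \<in> arr_hom C a c \<Longrightarrow> fst f \<in> Arr C \<and> Dom C (fst f) = Cod C a \<and> Cod C (fst f) = Cod C c \<and>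
   snd f \<in> Arr C \<and> Dom C (snd f) = Dom C a \<and> Cod C (snd f) = Dom C c \<and> c \<cdot> snd f = fst f \<cdot> a"
  unfolding arr_hom_def hom_def by auto
lemma arr_homI: "f0 \<in> Arr C \<Longrightarrow> Dom C f0 = Cod C a \<Longrightarrow> Cod C f0 = Cod C c \<Longrightarrow>
   f1 \<in> Arr C \<Longrightarrow> Dom C f1 = Dom C a \<Longrightarrow> Cod C f1 = Dom C c \<Longrightarrow> c \<cdot> f1 = f0 \<cdot> a \<Longrightarrow> (f0, f1) \<in> arr_hom C a c"
  unfolding arr_hom_def hom_def by auto
lemma cellD: "\<alpha> \<in> two_cell C a c f g \<Longrightarrow> \<alpha> \<in> Arr C \<and> Dom C \<alpha> = Cod C a \<and> Cod C \<alpha> = Dom C c \<and>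
   snd f \<ominus> snd g = \<alpha> \<cdot> a \<and> fst f \<ominus> fst g = c \<cdot> \<alpha>"
  unfolding two_cell_def hom_def by auto
lemma cellI: "\<alpha> \<in> Arr C \<Longrightarrow> Dom C \<alpha> = Cod C a \<Longrightarrow> Cod C \<alpha> = Dom C c \<Longrightarrow>
   snd f \<ominus> snd g = \<alpha> \<cdot> a \<Longrightarrow> fst f \<ominus> fst g = c \<cdot> \<alpha> \<Longrightarrow> \<alpha> \<in> two_cell C a c f g"
  unfolding two_cell_def hom_def by auto

lemma F_hom: assumes "f \<in> arr_hom C a b" shows "F f \<in> arr_hom C a b'"
proof -
  obtain f0 f1 where f: "f = (f0, f1)" by (cases f)
  have [simp]: "f0 \<in> Arr C" "Dom C f0 = Cod C a" "Cod C f0 = Cod C b" "f1 \<in> Arr C" "Dom C f1 = Dom C a" "Cod C f1 = Dom C b"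
    and e: "b \<cdot> f1 = f0 \<cdot> a" using arr_homD[OF assms] f by auto
  show ?thesis unfolding f postcomp_obj_def using e by (simp add: arr_homI)
qed

lemma F_cell: assumes "f \<in> arr_hom C a b" "g \<in> arr_hom C a b" "\<alpha> \<in> two_cell C a b f g"
  shows "postcomp_arr C (u0, u1) \<alpha> \<in> two_cell C a b' (F f) (F g)"
proof -
  obtain f0 f1 where f: "f = (f0, f1)" by (cases f)
  obtain g0 g1 where g: "g = (g0, g1)" by (cases g)
  have [simp]: "f0 \<in> Arr C" "Dom C f0 = Cod C a" "Cod C f0 = Cod C b" "f1 \<in> Arr C" "Dom C f1 = Dom C a" "Cod C f1 = Dom C b"
    using arr_homD[OF assms(1)] f by auto
  have [simp]: "g0 \<in> Arr C" "Dom C g0 = Cod C a" "Cod C g0 = Cod C b" "g1 \<in> Arr C" "Dom C g1 = Dom C a" "Cod C g1 = Dom C b"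
    using arr_homD[OF assms(2)] g by auto
  have [simp]: "\<alpha> \<in> Arr C" "Dom C \<alpha> = Cod C a" "Cod C \<alpha> = Dom C b"
    and e1: "f1 \<ominus> g1 = \<alpha> \<cdot> a" and e0: "f0 \<ominus> g0 = b \<cdot> \<alpha>" using cellD[OF assms(3)] f g by auto
  have "u1 \<cdot> f1 \<ominus> u1 \<cdot> g1 = u1 \<cdot> (f1 \<ominus> g1)" by simp
  hence 1: "u1 \<cdot> f1 \<ominus> u1 \<cdot> g1 = (u1 \<cdot> \<alpha>) \<cdot> a" using e1 by simp
  have "u0 \<cdot> f0 \<ominus> u0 \<cdot> g0 = u0 \<cdot> (f0 \<ominus> g0)" by simp
  hence 2: "u0 \<cdot> f0 \<ominus> u0 \<cdot> g0 = b' \<cdot> (u1 \<cdot> \<alpha>)" using e0 by simp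
  show ?thesis unfolding f g postcomp_obj_def postcomp_arr_def using 1 2 by (intro cellI) simp_all
qed

end

context sit begin

lemma faithful: assumes "f \<in> arr_hom C a b" "g \<in> arr_hom C a b" "\<alpha> \<in> two_cell C a b f g" "\<alpha>' \<in> two_cell C a b f g"
  and "u1 \<cdot> \<alpha> = u1 \<cdot> \<alpha>'" shows "\<alpha> = \<alpha>'"
proof -
  have A: "\<alpha> \<in> Arr C" "Dom C \<alpha> = Cod C a" "Cod C \<alpha> = Dom C b" "fst f \<ominus> fst g = b \<cdot> \<alpha>" using cellD[OF assms(3)] by auto
  have B: "\<alpha>' \<in> Arr C" "Dom C \<alpha>' = Cod C a" "Cod C \<alpha>' = Dom C b" "fst f \<ominus> fst g = b \<cdot> \<alpha>'" using cellD[OF assms(4)] by auto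
  show ?thesis using faith[of \<alpha> \<alpha>'] A B assms(5) by simp
qed

lemma full: assumes fh: "f \<in> arr_hom C a b" and gh: "g \<in> arr_hom C a b"
  and \<beta>h: "\<beta> \<in> two_cell C a b' (F f) (F g)"
  shows "\<exists>\<alpha>\<in>two_cell C a b f g. u1 \<cdot> \<alpha> = \<beta>"
proof -
  obtain f0 f1 where f: "f = (f0, f1)" by (cases f)
  obtain g0 g1 where g: "g = (g0, g1)" by (cases g)
  have [simp]: "f0 \<in> Arr C" "Dom C f0 = Cod C a" "Cod C f0 = Cod C b" "f1 \<in> Arr C" "Dom C f1 = Dom C a" "Cod C f1 = Dom C b"
    and bf: "b \<cdot> f1 = f0 \<cdot> a" using arr_homD[OF fh] f by auto
  have [simp]: "g0 \<in> Arr C" "Dom C g0 = Cod C a" "Cod C g0 = Cod C b" "g1 \<in> Arr C" "Dom C g1 = Dom C a" "Cod C g1 = Dom C b"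
    and bg: "b \<cdot> g1 = g0 \<cdot> a" using arr_homD[OF gh] g by auto
  have [simp]: "\<beta> \<in> Arr C" "Dom C \<beta> = Cod C a" "Cod C \<beta> = Dom C b'"
    and e1: "u1 \<cdot> f1 \<ominus> u1 \<cdot> g1 = \<beta> \<cdot> a" and e0: "u0 \<cdot> f0 \<ominus> u0 \<cdot> g0 = b' \<cdot> \<beta>"
    using cellD[OF \<beta>h] f g unfolding postcomp_obj_def by auto
  define d0 where "d0 = f0 \<ominus> g0"
  have d0[simp]: "d0 \<in> Arr C" "Dom C d0 = Cod C a" "Cod C d0 = Cod C b" unfolding d0_def by simp_all
  have ud0: "u0 \<cdot> d0 = b' \<cdot> \<beta>" unfolding d0_def using e0 by simp
  have "q' \<cdot> (u0 \<cdot> d0) = Zer C (Cod C a) (Cod C q')" unfolding ud0 by simp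
  hence "q \<cdot> d0 = Zer C (Cod C a) (Cod C q)" using qrefl[of d0] by simp
  then obtain \<gamma> where \<gamma>[simp]: "\<gamma> \<in> Arr C" "Dom C \<gamma> = Cod C a" "Cod C \<gamma> = Dom C b" and b\<gamma>: "b \<cdot> \<gamma> = d0"
    using blift[OF b_arr qq d0] by auto
  have "b' \<cdot> (u1 \<cdot> \<gamma> \<ominus> \<beta>) = Zer C (Cod C a) (Cod C b')" using b\<gamma> ud0 by simp
  then obtain t where t[simp]: "t \<in> Arr C" "Dom C t = Cod C a" "Cod C t = Dom C b"
      and bt: "b \<cdot> t = Zer C (Cod C a) (Cod C b)" and ut: "u1 \<cdot> t = u1 \<cdot> \<gamma> \<ominus> \<beta>"
    using klift[of "u1 \<cdot> \<gamma> \<ominus> \<beta>"] by auto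
  define \<alpha> where "\<alpha> = \<gamma> \<ominus> t"
  have \<alpha>[simp]: "\<alpha> \<in> Arr C" "Dom C \<alpha> = Cod C a" "Cod C \<alpha> = Dom C b" unfolding \<alpha>_def by simp_all
  have b\<alpha>: "b \<cdot> \<alpha> = d0" unfolding \<alpha>_def using b\<gamma> bt by simp
  have u\<alpha>: "u1 \<cdot> \<alpha> = \<beta>" unfolding \<alpha>_def using ut by (simp add: gsimps)
  have b\<alpha>'[simp]: "\<And>X. X \<in> Arr C \<Longrightarrow> Cod C X = Cod C a \<Longrightarrow> b \<cdot> (\<alpha> \<cdot> X) = d0 \<cdot> X"
    using assoc_eq[of \<alpha> b, OF _ _ _ _ _ b\<alpha>] by simp
  have u\<alpha>'[simp]: "\<And>X. X \<in> Arr C \<Longrightarrow> Cod C X = Cod C a \<Longrightarrow> u1 \<cdot> (\<alpha> \<cdot> X) = \<beta> \<cdot> X"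
    using assoc_eq[of \<alpha> u1, OF _ _ _ _ _ u\<alpha>] by simp
  have "\<alpha> \<cdot> a = f1 \<ominus> g1"
  proof (rule faith)
    show "b \<cdot> (\<alpha> \<cdot> a) = b \<cdot> (f1 \<ominus> g1)" using bf bg by (simp add: d0_def)
    show "u1 \<cdot> (\<alpha> \<cdot> a) = u1 \<cdot> (f1 \<ominus> g1)" using e1 by simp
  qed simp_all
  hence "\<alpha> \<in> two_cell C a b f g" unfolding f g using b\<alpha> unfolding d0_def by (intro cellI) simp_all
  thus ?thesis using u\<alpha> by blast
qed

lemma esssurj: assumes hh: "h \<in> arr_hom C a b'"
  shows "\<exists>f\<in>arr_hom C a b. \<exists>\<epsilon>. \<epsilon> \<in> two_cell C a b' (F f) h"
proof -
  obtain h0 h1 where h: "h = (h0, h1)" by (cases h)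
  have [simp]: "h0 \<in> Arr C" "Dom C h0 = Cod C a" "Cod C h0 = Cod C b'" "h1 \<in> Arr C" "Dom C h1 = Dom C a" "Cod C h1 = Dom C b'"
    and bh: "b' \<cdot> h1 = h0 \<cdot> a" using arr_homD[OF hh] h by auto
  have U: "\<forall>e g. is_epi C e \<longrightarrow> g \<in> hom C (Cod C a) (Cod C e) \<longrightarrow> (\<exists>h \<in> hom C (Cod C a) (Dom C e). e \<cdot> h = g)"
    using proj unfolding projective_def by (rule conjunct2)
  have "psii \<cdot> (q' \<cdot> h0) \<in> hom C (Cod C a) (Cod C q)" by (simp add: hom_def)
  then obtain f0 where f0h: "f0 \<in> hom C (Cod C a) (Dom C q)" and qf0: "q \<cdot> f0 = psii \<cdot> (q' \<cdot> h0)"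
    using U coker_epi[OF qq] by blast
  have [simp]: "f0 \<in> Arr C" "Dom C f0 = Cod C a" "Cod C f0 = Cod C b" using f0h by (simp_all add: hom_def)
  have "q' \<cdot> (u0 \<cdot> f0) = \<psi> \<cdot> (q \<cdot> f0)" by simp
  also have "\<dots> = q' \<cdot> h0" using qf0 by simp
  finally have quf: "q' \<cdot> (u0 \<cdot> f0) = q' \<cdot> h0" .
  define d where "d = u0 \<cdot> f0 \<ominus> h0"
  have d[simp]: "d \<in> Arr C" "Dom C d = Cod C a" "Cod C d = Cod C b'" unfolding d_def by simp_all
  have "q' \<cdot> d = Zer C (Cod C a) (Cod C q')" unfolding d_def using quf by simp
  then obtain \<epsilon> where \<epsilon>[simp]: "\<epsilon> \<in> Arr C" "Dom C \<epsilon> = Cod C a" "Cod C \<epsilon> = Dom C b'" and b\<epsilon>: "b' \<cdot> \<epsilon> = d"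
    using blift[OF b'_arr qq' d] by auto
  have b\<epsilon>'[simp]: "\<And>X. X \<in> Arr C \<Longrightarrow> Cod C X = Cod C a \<Longrightarrow> b' \<cdot> (\<epsilon> \<cdot> X) = d \<cdot> X"
    using assoc_eq[of \<epsilon> b', OF _ _ _ _ _ b\<epsilon>] by simp
  have "b' \<cdot> (h1 \<oplus> \<epsilon> \<cdot> a) = u0 \<cdot> (f0 \<cdot> a)" using bh by (simp add: gsimps d_def)
  then obtain f1 where f1[simp]: "f1 \<in> Arr C" "Dom C f1 = Dom C a" "Cod C f1 = Dom C b"
     and bf1: "b \<cdot> f1 = f0 \<cdot> a" and uf1: "u1 \<cdot> f1 = h1 \<oplus> \<epsilon> \<cdot> a"
    using pb[of "h1 \<oplus> \<epsilon> \<cdot> a" "f0 \<cdot> a"] by auto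
  have fh: "(f0, f1) \<in> arr_hom C a b" using bf1 by (simp add: arr_homI)
  have "\<epsilon> \<in> two_cell C a b' (F (f0, f1)) h"
    unfolding h postcomp_obj_def using uf1 b\<epsilon> unfolding d_def by (intro cellI) (simp_all add: gsimps)
  thus ?thesis using fh by blast
qed

end

context sit begin

lemma zero_cell: assumes c: "c \<in> Arr C" and f: "f \<in> arr_hom C a c"
  shows "Zer C (Cod C a) (Dom C c) \<in> two_cell C a c f f"
proof -
  have F: "fst f \<in> Arr C" "Dom C (fst f) = Cod C a" "Cod C (fst f) = Cod C c" "snd f \<in> Arr C" "Dom C (snd f) = Dom C a" "Cod C (snd f) = Dom C c"
    using arr_homD[OF f] by auto
  show ?thesis using F c by (intro cellI) simp_all
qed

lemma add_cell: assumes c: "c \<in> Arr C" and f: "f \<in> arr_hom C a c" and g: "g \<in> arr_hom C a c" and h: "h \<in> arr_hom C a c"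
  and \<alpha>: "\<alpha> \<in> two_cell C a c f g" and \<beta>: "\<beta> \<in> two_cell C a c g h"
  shows "\<alpha> \<oplus> \<beta> \<in> two_cell C a c f h"
proof -
  have F: "fst f \<in> Arr C" "Dom C (fst f) = Cod C a" "Cod C (fst f) = Cod C c" "snd f \<in> Arr C" "Dom C (snd f) = Dom C a" "Cod C (snd f) = Dom C c"
    using arr_homD[OF f] by auto
  have G: "fst g \<in> Arr C" "Dom C (fst g) = Cod C a" "Cod C (fst g) = Cod C c" "snd g \<in> Arr C" "Dom C (snd g) = Dom C a" "Cod C (snd g) = Dom C c"
    using arr_homD[OF g] by auto
  have H: "fst h \<in> Arr C" "Dom C (fst h) = Cod C a" "Cod C (fst h) = Cod C c" "snd h \<in> Arr C" "Dom C (snd h) = Dom C a" "Cod C (snd h) = Dom C c"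
    using arr_homD[OF h] by auto
  have A: "\<alpha> \<in> Arr C" "Dom C \<alpha> = Cod C a" "Cod C \<alpha> = Dom C c" and A1: "snd f \<ominus> snd g = \<alpha> \<cdot> a" and A0: "fst f \<ominus> fst g = c \<cdot> \<alpha>"
    using cellD[OF \<alpha>] by auto
  have B: "\<beta> \<in> Arr C" "Dom C \<beta> = Cod C a" "Cod C \<beta> = Dom C c" and B1: "snd g \<ominus> snd h = \<beta> \<cdot> a" and B0: "fst g \<ominus> fst h = c \<cdot> \<beta>"
    using cellD[OF \<beta>] by auto
  show ?thesis
  proof (rule cellI)
    show "snd f \<ominus> snd h = (\<alpha> \<oplus> \<beta>) \<cdot> a" using F G H A B A1[symmetric] B1[symmetric] c by (simp add: gsimps)
    show "fst f \<ominus> fst h = c \<cdot> (\<alpha> \<oplus> \<beta>)" using F G H A B A0[symmetric] B0[symmetric] c by (simp add: gsimps)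
  qed (use A B in simp_all)
qed

lemma neg_cell: assumes c: "c \<in> Arr C" and f: "f \<in> arr_hom C a c" and g: "g \<in> arr_hom C a c"
  and \<alpha>: "\<alpha> \<in> two_cell C a c f g"
  shows "Ngt C \<alpha> \<in> two_cell C a c g f"
proof -
  have F: "fst f \<in> Arr C" "Dom C (fst f) = Cod C a" "Cod C (fst f) = Cod C c" "snd f \<in> Arr C" "Dom C (snd f) = Dom C a" "Cod C (snd f) = Dom C c"
    using arr_homD[OF f] by auto
  have G: "fst g \<in> Arr C" "Dom C (fst g) = Cod C a" "Cod C (fst g) = Cod C c" "snd g \<in> Arr C" "Dom C (snd g) = Dom C a" "Cod C (snd g) = Dom C c"
    using arr_homD[OF g] by auto
  have A: "\<alpha> \<in> Arr C" "Dom C \<alpha> = Cod C a" "Cod C \<alpha> = Dom C c" and A1: "snd f \<ominus> snd g = \<alpha> \<cdot> a" and A0: "fst f \<ominus> fst g = c \<cdot> \<alpha>"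
    using cellD[OF \<alpha>] by auto
  show ?thesis
  proof (rule cellI)
    show "snd g \<ominus> snd f = Ngt C \<alpha> \<cdot> a" using F G A A1[symmetric] c by (simp add: gsimps add_comm_a)
    show "fst g \<ominus> fst f = c \<cdot> Ngt C \<alpha>" using F G A A0[symmetric] c by (simp add: gsimps add_comm_a)
  qed (use A in simp_all)
qed

lemma cellA: "\<alpha> \<in> two_cell C a c f g \<Longrightarrow> \<alpha> \<in> Arr C \<and> Dom C \<alpha> = Cod C a \<and> Cod C \<alpha> = Dom C c"
  using cellD by blast

definition "GoE h = (SOME p. fst p \<in> arr_hom C a b \<and> snd p \<in> two_cell C a b' (F (fst p)) h)"
definition "Go h = fst (GoE h)"
definition "eps h = snd (GoE h)"

lemma Go: assumes "h \<in> arr_hom C a b'" shows "Go h \<in> arr_hom C a b \<and> eps h \<in> two_cell C a b' (F (Go h)) h"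
proof -
  have "\<exists>p. fst p \<in> arr_hom C a b \<and> snd p \<in> two_cell C a b' (F (fst p)) h"
    using esssurj[OF assms] by auto
  hence "fst (GoE h) \<in> arr_hom C a b \<and> snd (GoE h) \<in> two_cell C a b' (F (fst (GoE h))) h"
    unfolding GoE_def by (rule someI_ex)
  thus ?thesis unfolding Go_def eps_def .
qed

definition "Ga h h' \<beta> = (SOME \<alpha>. \<alpha> \<in> two_cell C a b (Go h) (Go h') \<and> u1 \<cdot> \<alpha> = eps h \<oplus> \<beta> \<ominus> eps h')"

lemma Ga: assumes h: "h \<in> arr_hom C a b'" and h': "h' \<in> arr_hom C a b'" and \<beta>: "\<beta> \<in> two_cell C a b' h h'"
  shows "Ga h h' \<beta> \<in> two_cell C a b (Go h) (Go h') \<and> u1 \<cdot> Ga h h' \<beta> = eps h \<oplus> \<beta> \<ominus> eps h'"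
proof -
  have g1: "Go h \<in> arr_hom C a b" "eps h \<in> two_cell C a b' (F (Go h)) h" using Go[OF h] by auto
  have g2: "Go h' \<in> arr_hom C a b" "eps h' \<in> two_cell C a b' (F (Go h')) h'" using Go[OF h'] by auto
  have "eps h \<oplus> \<beta> \<in> two_cell C a b' (F (Go h)) h'"
    using add_cell[OF b'_arr F_hom[OF g1(1)] h h' g1(2) \<beta>] .
  hence "eps h \<oplus> \<beta> \<ominus> eps h' \<in> two_cell C a b' (F (Go h)) (F (Go h'))"
    using add_cell[OF b'_arr F_hom[OF g1(1)] h' F_hom[OF g2(1)] _ neg_cell[OF b'_arr F_hom[OF g2(1)] h' g2(2)]] by blast
  then obtain \<alpha> where "\<alpha> \<in> two_cell C a b (Go h) (Go h')" "u1 \<cdot> \<alpha> = eps h \<oplus> \<beta> \<ominus> eps h'"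
    using full[OF g1(1) g2(1)] by blast
  hence "\<exists>\<alpha>. \<alpha> \<in> two_cell C a b (Go h) (Go h') \<and> u1 \<cdot> \<alpha> = eps h \<oplus> \<beta> \<ominus> eps h'" by blast
  thus ?thesis unfolding Ga_def by (rule someI_ex)
qed

definition "eta f = (SOME \<alpha>. \<alpha> \<in> two_cell C a b f (Go (F f)) \<and> u1 \<cdot> \<alpha> = Ngt C (eps (F f)))"

lemma eta: assumes f: "f \<in> arr_hom C a b"
  shows "eta f \<in> two_cell C a b f (Go (F f)) \<and> u1 \<cdot> eta f = Ngt C (eps (F f))"
proof -
  have Ff: "F f \<in> arr_hom C a b'" using F_hom[OF f] .
  have g: "Go (F f) \<in> arr_hom C a b" "eps (F f) \<in> two_cell C a b' (F (Go (F f))) (F f)" using Go[OF Ff] by auto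
  have "Ngt C (eps (F f)) \<in> two_cell C a b' (F f) (F (Go (F f)))"
    using neg_cell[OF b'_arr F_hom[OF g(1)] Ff g(2)] .
  then obtain \<alpha> where "\<alpha> \<in> two_cell C a b f (Go (F f))" "u1 \<cdot> \<alpha> = Ngt C (eps (F f))"
    using full[OF f g(1)] by blast
  hence "\<exists>\<alpha>. \<alpha> \<in> two_cell C a b f (Go (F f)) \<and> u1 \<cdot> \<alpha> = Ngt C (eps (F f))" by blast
  thus ?thesis unfolding eta_def by (rule someI_ex)
qed

end

context sit begin

lemma P3: "\<forall>h \<in> arr_hom C a b'. Ga h h (Zer C (Cod C a) (Dom C b')) = Zer C (Cod C a) (Dom C b)"
proof (intro ballI)
  fix h assume h: "h \<in> arr_hom C a b'"
  have z: "Zer C (Cod C a) (Dom C b') \<in> two_cell C a b' h h" using zero_cell[OF b'_arr h] .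
  have G: "Go h \<in> arr_hom C a b" "eps h \<in> two_cell C a b' (F (Go h)) h" using Go[OF h] by auto
  have E: "eps h \<in> Arr C" "Dom C (eps h) = Cod C a" "Cod C (eps h) = Dom C b'" using cellA[OF G(2)] by auto
  have g: "Ga h h (Zer C (Cod C a) (Dom C b')) \<in> two_cell C a b (Go h) (Go h)"
    "u1 \<cdot> Ga h h (Zer C (Cod C a) (Dom C b')) = eps h \<oplus> Zer C (Cod C a) (Dom C b') \<ominus> eps h"
    using Ga[OF h h z] by auto
  have z1: "Zer C (Cod C a) (Dom C b) \<in> two_cell C a b (Go h) (Go h)" using zero_cell[OF b_arr G(1)] .
  show "Ga h h (Zer C (Cod C a) (Dom C b')) = Zer C (Cod C a) (Dom C b)"
    using faithful[OF G(1) G(1) g(1) z1] g(2) E by simp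
qed

lemma P4: "\<forall>h \<in> arr_hom C a b'. \<forall>h' \<in> arr_hom C a b'. \<forall>h'' \<in> arr_hom C a b'. \<forall>\<beta> \<in> two_cell C a b' h h'. \<forall>\<beta>' \<in> two_cell C a b' h' h''. Ga h h'' (Add C \<beta> \<beta>') = Add C (Ga h h' \<beta>) (Ga h' h'' \<beta>')"
proof (intro ballI)
  fix h h' h'' \<beta> \<beta>'
  assume h: "h \<in> arr_hom C a b'" and h': "h' \<in> arr_hom C a b'" and h'': "h'' \<in> arr_hom C a b'"
    and \<beta>: "\<beta> \<in> two_cell C a b' h h'" and \<beta>': "\<beta>' \<in> two_cell C a b' h' h''"
  have G: "Go h \<in> arr_hom C a b" "eps h \<in> two_cell C a b' (F (Go h)) h" using Go[OF h] by auto
  have G': "Go h' \<in> arr_hom C a b" "eps h' \<in> two_cell C a b' (F (Go h')) h'" using Go[OF h'] by auto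
  have G'': "Go h'' \<in> arr_hom C a b" "eps h'' \<in> two_cell C a b' (F (Go h'')) h''" using Go[OF h''] by auto
  have E: "eps h \<in> Arr C" "Dom C (eps h) = Cod C a" "Cod C (eps h) = Dom C b'" using cellA[OF G(2)] by auto
  have E': "eps h' \<in> Arr C" "Dom C (eps h') = Cod C a" "Cod C (eps h') = Dom C b'" using cellA[OF G'(2)] by auto
  have E'': "eps h'' \<in> Arr C" "Dom C (eps h'') = Cod C a" "Cod C (eps h'') = Dom C b'" using cellA[OF G''(2)] by auto
  have B: "\<beta> \<in> Arr C" "Dom C \<beta> = Cod C a" "Cod C \<beta> = Dom C b'" using cellA[OF \<beta>] by auto
  have B': "\<beta>' \<in> Arr C" "Dom C \<beta>' = Cod C a" "Cod C \<beta>' = Dom C b'" using cellA[OF \<beta>'] by auto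
  have bb: "\<beta> \<oplus> \<beta>' \<in> two_cell C a b' h h''" using add_cell[OF b'_arr h h' h'' \<beta> \<beta>'] .
  have g1: "Ga h h' \<beta> \<in> two_cell C a b (Go h) (Go h')" "u1 \<cdot> Ga h h' \<beta> = eps h \<oplus> \<beta> \<ominus> eps h'" using Ga[OF h h' \<beta>] by auto
  have g2: "Ga h' h'' \<beta>' \<in> two_cell C a b (Go h') (Go h'')" "u1 \<cdot> Ga h' h'' \<beta>' = eps h' \<oplus> \<beta>' \<ominus> eps h''" using Ga[OF h' h'' \<beta>'] by auto
  have g3: "Ga h h'' (\<beta> \<oplus> \<beta>') \<in> two_cell C a b (Go h) (Go h'')" "u1 \<cdot> Ga h h'' (\<beta> \<oplus> \<beta>') = eps h \<oplus> (\<beta> \<oplus> \<beta>') \<ominus> eps h''"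
    using Ga[OF h h'' bb] by auto
  have s: "Ga h h' \<beta> \<oplus> Ga h' h'' \<beta>' \<in> two_cell C a b (Go h) (Go h'')"
    using add_cell[OF b_arr G(1) G'(1) G''(1) g1(1) g2(1)] .
  have A1: "Ga h h' \<beta> \<in> Arr C" "Dom C (Ga h h' \<beta>) = Cod C a" "Cod C (Ga h h' \<beta>) = Dom C b" using cellA[OF g1(1)] by auto
  have A2: "Ga h' h'' \<beta>' \<in> Arr C" "Dom C (Ga h' h'' \<beta>') = Cod C a" "Cod C (Ga h' h'' \<beta>') = Dom C b" using cellA[OF g2(1)] by auto
  have "u1 \<cdot> Ga h h'' (\<beta> \<oplus> \<beta>') = u1 \<cdot> (Ga h h' \<beta> \<oplus> Ga h' h'' \<beta>')"
    using g1(2) g2(2) g3(2) A1 A2 E E' E'' B B' by (simp add: gsimps)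
  thus "Ga h h'' (\<beta> \<oplus> \<beta>') = Ga h h' \<beta> \<oplus> Ga h' h'' \<beta>'"
    using faithful[OF G(1) G''(1) g3(1) s] by blast
qed

lemma P6: "\<forall>f \<in> arr_hom C a b. \<forall>g \<in> arr_hom C a b. \<forall>\<alpha> \<in> two_cell C a b f g. Add C (eta f) (Ga (postcomp_obj C (u0, u1) f) (postcomp_obj C (u0, u1) g) (postcomp_arr C (u0, u1) \<alpha>)) = Add C \<alpha> (eta g)"
proof (intro ballI)
  fix f g \<alpha> assume f: "f \<in> arr_hom C a b" and g: "g \<in> arr_hom C a b" and \<alpha>: "\<alpha> \<in> two_cell C a b f g"
  have Ff: "F f \<in> arr_hom C a b'" and Fg: "F g \<in> arr_hom C a b'" using F_hom f g by auto
  have Fa: "postcomp_arr C (u0, u1) \<alpha> = u1 \<cdot> \<alpha>" unfolding postcomp_arr_def by simp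
  have Fac: "u1 \<cdot> \<alpha> \<in> two_cell C a b' (F f) (F g)" using F_cell[OF f g \<alpha>] Fa by simp
  have Gf: "Go (F f) \<in> arr_hom C a b" "eps (F f) \<in> two_cell C a b' (F (Go (F f))) (F f)" using Go[OF Ff] by auto
  have Gg: "Go (F g) \<in> arr_hom C a b" "eps (F g) \<in> two_cell C a b' (F (Go (F g))) (F g)" using Go[OF Fg] by auto
  have E1: "eps (F f) \<in> Arr C" "Dom C (eps (F f)) = Cod C a" "Cod C (eps (F f)) = Dom C b'" using cellA[OF Gf(2)] by auto
  have E2: "eps (F g) \<in> Arr C" "Dom C (eps (F g)) = Cod C a" "Cod C (eps (F g)) = Dom C b'" using cellA[OF Gg(2)] by auto
  have ef: "eta f \<in> two_cell C a b f (Go (F f))" "u1 \<cdot> eta f = Ngt C (eps (F f))" using eta[OF f] by auto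
  have eg: "eta g \<in> two_cell C a b g (Go (F g))" "u1 \<cdot> eta g = Ngt C (eps (F g))" using eta[OF g] by auto
  have ga: "Ga (F f) (F g) (u1 \<cdot> \<alpha>) \<in> two_cell C a b (Go (F f)) (Go (F g))"
    "u1 \<cdot> Ga (F f) (F g) (u1 \<cdot> \<alpha>) = eps (F f) \<oplus> u1 \<cdot> \<alpha> \<ominus> eps (F g)" using Ga[OF Ff Fg Fac] by auto
  have A: "\<alpha> \<in> Arr C" "Dom C \<alpha> = Cod C a" "Cod C \<alpha> = Dom C b" using cellA[OF \<alpha>] by auto
  have A1: "eta f \<in> Arr C" "Dom C (eta f) = Cod C a" "Cod C (eta f) = Dom C b" using cellA[OF ef(1)] by auto
  have A2: "eta g \<in> Arr C" "Dom C (eta g) = Cod C a" "Cod C (eta g) = Dom C b" using cellA[OF eg(1)] by auto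
  have A3: "Ga (F f) (F g) (u1 \<cdot> \<alpha>) \<in> Arr C" "Dom C (Ga (F f) (F g) (u1 \<cdot> \<alpha>)) = Cod C a"
    "Cod C (Ga (F f) (F g) (u1 \<cdot> \<alpha>)) = Dom C b" using cellA[OF ga(1)] by auto
  have L: "eta f \<oplus> Ga (F f) (F g) (u1 \<cdot> \<alpha>) \<in> two_cell C a b f (Go (F g))"
    using add_cell[OF b_arr f Gf(1) Gg(1) ef(1) ga(1)] .
  have R: "\<alpha> \<oplus> eta g \<in> two_cell C a b f (Go (F g))"
    using add_cell[OF b_arr f g Gg(1) \<alpha> eg(1)] .
  have "u1 \<cdot> (eta f \<oplus> Ga (F f) (F g) (u1 \<cdot> \<alpha>)) = u1 \<cdot> (\<alpha> \<oplus> eta g)"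
    using ef(2) eg(2) ga(2) A A1 A2 A3 E1 E2 by (simp add: gsimps)
  thus "eta f \<oplus> Ga (F f) (F g) (postcomp_arr C (u0, u1) \<alpha>) = \<alpha> \<oplus> eta g"
    using faithful[OF f Gg(1) L R] Fa by simp
qed

lemma P8: "\<forall>h \<in> arr_hom C a b'. \<forall>h' \<in> arr_hom C a b'. \<forall>\<beta> \<in> two_cell C a b' h h'. Add C (eps h) \<beta> = Add C (postcomp_arr C (u0, u1) (Ga h h' \<beta>)) (eps h')"
proof (intro ballI)
  fix h h' \<beta> assume h: "h \<in> arr_hom C a b'" and h': "h' \<in> arr_hom C a b'" and \<beta>: "\<beta> \<in> two_cell C a b' h h'"
  have G: "eps h \<in> two_cell C a b' (F (Go h)) h" using Go[OF h] by auto
  have G': "eps h' \<in> two_cell C a b' (F (Go h')) h'" using Go[OF h'] by auto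
  have E: "eps h \<in> Arr C" "Dom C (eps h) = Cod C a" "Cod C (eps h) = Dom C b'" using cellA[OF G] by auto
  have E': "eps h' \<in> Arr C" "Dom C (eps h') = Cod C a" "Cod C (eps h') = Dom C b'" using cellA[OF G'] by auto
  have B: "\<beta> \<in> Arr C" "Dom C \<beta> = Cod C a" "Cod C \<beta> = Dom C b'" using cellA[OF \<beta>] by auto
  have g: "u1 \<cdot> Ga h h' \<beta> = eps h \<oplus> \<beta> \<ominus> eps h'" using Ga[OF h h' \<beta>] by auto
  show "eps h \<oplus> \<beta> = postcomp_arr C (u0, u1) (Ga h h' \<beta>) \<oplus> eps h'"
    unfolding postcomp_arr_def using g E E' B by (simp add: gsimps)
qed

lemma equiv: "postcomp_equivalence C a b b' (u0, u1)"
  unfolding postcomp_equivalence_def Let_def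
  apply (rule exI[of _ Go], rule exI[of _ Ga], rule exI[of _ eta], rule exI[of _ eps])
  apply (intro conjI)
  subgoal using Go by blast
  subgoal using Ga by blast
  subgoal by (rule P3)
  subgoal by (rule P4)
  subgoal using eta by blast
  subgoal by (rule P6)
  subgoal using Go by blast
  subgoal by (rule P8)
  done

end

theorem corollary2p2:
  fixes C :: "('o, 'm) acat"
  assumes "abelian_category C"
    and "a \<in> Arr C" and "b \<in> Arr C" and "b' \<in> Arr C"
    and "(u0, u1) \<in> arr_hom C b b'"
    and "\<exists>k k' \<phi>. is_kernel C b k \<and> is_kernel C b' k' \<and>
           \<phi> \<in> hom C (Dom C k) (Dom C k') \<and> Cmp C k' \<phi> = Cmp C u1 k \<and> is_iso C \<phi>"
    and "\<exists>q q' \<psi>. is_cokernel C b q \<and> is_cokernel C b' q' \<and>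
           \<psi> \<in> hom C (Cod C q) (Cod C q') \<and> Cmp C \<psi> q = Cmp C q' u0 \<and> is_iso C \<psi>"
    and "projective C (Cod C a)"
  shows "postcomp_equivalence C a b b' (u0, u1)"
proof -
  obtain k k' \<phi> where K: "is_kernel C b k" "is_kernel C b' k'"
    "\<phi> \<in> hom C (Dom C k) (Dom C k')" "Cmp C k' \<phi> = Cmp C u1 k" "is_iso C \<phi>"
    using assms(6) by blast
  obtain q q' \<psi> where Q: "is_cokernel C b q" "is_cokernel C b' q'"
    "\<psi> \<in> hom C (Cod C q) (Cod C q')" "Cmp C \<psi> q = Cmp C q' u0" "is_iso C \<psi>"
    using assms(7) by blast
  interpret sit C a b b' u0 u1 k k' \<phi> q q' \<psi>
    by (unfold_locales) (use assms K Q in auto)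
  show ?thesis by (rule equiv)
qed

end
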